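(* Let $X$ be an infinite-dimensional complex Banach space and $T\in L(X)$ be such that $\sigma_{ap}(T)=\partial\sigma(T)$ and no point of $\partial\sigma(T)$ is isolated in $\sigma(T)$. Then $$\sigma_{ec}(T)\subset\sigma_{ap}(T)=\sigma_{gKR}(T)=\sigma_{gK}(T)=\sigma_{Kt}(T)=\sigma_{eK}(T)=\sigma_K(T)=\sigma_{\mathbf{gDR}\mathcal M}(T).$$
   Context: $\sigma_{ap}(T)$ is the set of $\lambda$ with $T-\lambda$ not bounded below (not injective with closed range); $\sigma_{ec}(T)=\{\lambda: R(T-\lambda)\text{ not closed}\}$. $S$ is Kato if $R(S)$ is closed and $N(S)\subset R(S^n)$ for all $n$; $S$ is Riesz if $S-\lambda$ is Fredholm for all $\lambda\ne0$. For an operator $S$ and closed $S$-invariant $M,N$ with $X=M\oplus N$ and $S_M$ Kato: if $S_N$ is Riesz, $S$ admits a GKRD; if $S_N$ is quasinilpotent, a GKD; if $S_N$ is nilpotent, $S$ is of Kato type; if $N$ is finite-dimensional and $S_N$ nilpotent, $S$ is essentially Kato. $\sigma_{gKR}$, $\sigma_{gK}$, $\sigma_{Kt}$, $\sigma_{eK}$, $\sigma_K$: sets of $\lambda$ with $T-\lambda$ not admitting a GKRD, not admitting a GKD, not of Kato type, not essentially Kato, not Kato. $\sigma_{\mathbf{gDR}\mathcal M}(T)$ is the set of $\lambda$ for which there are no closed $(T-\lambda)$-invariant $M,N$ with $X=M\oplus N$, $(T-\lambda)_M$ bounded below and $(T-\lambda)_N$ Riesz. *)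

theory Defs
  imports "HOL-Analysis.Analysis"
begin

text \<open>HOL-Analysis has no complex vector spaces; a complex Banach space is a real
 Banach space with a complex scalar multiplication extending the real one and
 compatible with the norm.\<close>

class cbanach = banach +
  fixes scaleC :: "complex \<Rightarrow> 'a \<Rightarrow> 'a" (infixr \<open>*\<^sub>C\<close> 75)
  assumes scaleC_add_right: "a *\<^sub>C (x + y) = a *\<^sub>C x + a *\<^sub>C y"
    and scaleC_add_left: "(a + b) *\<^sub>C x = a *\<^sub>C x + b *\<^sub>C x"
    and scaleC_scaleC: "a *\<^sub>C (b *\<^sub>C x) = (a * b) *\<^sub>C x"
    and scaleC_one: "1 *\<^sub>C x = x"
    and scaleR_scaleC: "scaleR r x = complex_of_real r *\<^sub>C x"
    and norm_scaleC: "norm (a *\<^sub>C x) = cmod a * norm x"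

instantiation complex :: cbanach
begin
definition scaleC_complex :: "complex \<Rightarrow> complex \<Rightarrow> complex" where
  "scaleC_complex a x = a * x"
instance
  by standard (auto simp: scaleC_complex_def algebra_simps norm_mult scaleR_conv_of_real)
end

definition csubspace :: "'a::cbanach set \<Rightarrow> bool" where
  "csubspace M \<longleftrightarrow> 0 \<in> M \<and> (\<forall>x\<in>M. \<forall>y\<in>M. x + y \<in> M) \<and> (\<forall>c. \<forall>x\<in>M. c *\<^sub>C x \<in> M)"

definition cspan :: "'a::cbanach set \<Rightarrow> 'a set" where
  "cspan B = csubspace hull B"

definition fin_dim :: "'a::cbanach set \<Rightarrow> bool" where
  "fin_dim K \<longleftrightarrow> (\<exists>B. finite B \<and> B \<subseteq> K \<and> K \<subseteq> cspan B)"

definition bounded_clinear :: "('a::cbanach \<Rightarrow> 'a) \<Rightarrow> bool" where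
  "bounded_clinear T \<longleftrightarrow> bounded_linear T \<and> (\<forall>c x. T (c *\<^sub>C x) = c *\<^sub>C T x)"

definition opshift :: "('a::cbanach \<Rightarrow> 'a) \<Rightarrow> complex \<Rightarrow> 'a \<Rightarrow> 'a" where
  "opshift T z = (\<lambda>x. T x - z *\<^sub>C x)"

section \<open>Notions for the restriction S_N of S to a closed invariant subspace N\<close>

definition invertible_on :: "('a::cbanach \<Rightarrow> 'a) \<Rightarrow> 'a set \<Rightarrow> bool" where
  "invertible_on S N \<longleftrightarrow> (\<exists>R. R ` N \<subseteq> N \<and> (\<forall>x\<in>N. R (S x) = x \<and> S (R x) = x)
       \<and> (\<exists>K. \<forall>x\<in>N. norm (R x) \<le> K * norm x))"

definition spectrum_on :: "('a::cbanach \<Rightarrow> 'a) \<Rightarrow> 'a set \<Rightarrow> complex set" where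
  "spectrum_on S N = {z. \<not> invertible_on (opshift S z) N}"

definition bounded_below_on :: "('a::cbanach \<Rightarrow> 'a) \<Rightarrow> 'a set \<Rightarrow> bool" where
  "bounded_below_on S M \<longleftrightarrow> (\<exists>c>0. \<forall>x\<in>M. c * norm x \<le> norm (S x))"

definition kato_on :: "('a::cbanach \<Rightarrow> 'a) \<Rightarrow> 'a set \<Rightarrow> bool" where
  "kato_on S M \<longleftrightarrow> closed (S ` M) \<and> (\<forall>n. {x\<in>M. S x = 0} \<subseteq> (S ^^ n) ` M)"

definition fredholm_on :: "('a::cbanach \<Rightarrow> 'a) \<Rightarrow> 'a set \<Rightarrow> bool" where
  "fredholm_on S N \<longleftrightarrow> fin_dim {x\<in>N. S x = 0} \<and> closed (S ` N)
     \<and> (\<exists>B. finite B \<and> B \<subseteq> N \<and> N \<subseteq> {r + y |r y. r \<in> S ` N \<and> y \<in> cspan B})"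

definition riesz_on :: "('a::cbanach \<Rightarrow> 'a) \<Rightarrow> 'a set \<Rightarrow> bool" where
  "riesz_on S N \<longleftrightarrow> (\<forall>z. z \<noteq> 0 \<longrightarrow> fredholm_on (opshift S z) N)"

definition quasinilpotent_on :: "('a::cbanach \<Rightarrow> 'a) \<Rightarrow> 'a set \<Rightarrow> bool" where
  "quasinilpotent_on S N \<longleftrightarrow> spectrum_on S N \<subseteq> {0}"

definition nilpotent_on :: "('a::cbanach \<Rightarrow> 'a) \<Rightarrow> 'a set \<Rightarrow> bool" where
  "nilpotent_on S N \<longleftrightarrow> (\<exists>n. \<forall>x\<in>N. (S ^^ n) x = 0)"

definition reducing_pair :: "('a::cbanach \<Rightarrow> 'a) \<Rightarrow> 'a set \<Rightarrow> 'a set \<Rightarrow> bool" where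
  "reducing_pair S M N \<longleftrightarrow> csubspace M \<and> csubspace N \<and> closed M \<and> closed N
     \<and> S ` M \<subseteq> M \<and> S ` N \<subseteq> N \<and> M \<inter> N = {0}
     \<and> (\<forall>x. \<exists>m\<in>M. \<exists>n\<in>N. x = m + n)"

definition has_GKRD :: "('a::cbanach \<Rightarrow> 'a) \<Rightarrow> bool" where
  "has_GKRD S \<longleftrightarrow> (\<exists>M N. reducing_pair S M N \<and> kato_on S M \<and> riesz_on S N)"

definition has_GKD :: "('a::cbanach \<Rightarrow> 'a) \<Rightarrow> bool" where
  "has_GKD S \<longleftrightarrow> (\<exists>M N. reducing_pair S M N \<and> kato_on S M \<and> quasinilpotent_on S N)"

definition kato_type :: "('a::cbanach \<Rightarrow> 'a) \<Rightarrow> bool" where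
  "kato_type S \<longleftrightarrow> (\<exists>M N. reducing_pair S M N \<and> kato_on S M \<and> nilpotent_on S N)"

definition essentially_kato :: "('a::cbanach \<Rightarrow> 'a) \<Rightarrow> bool" where
  "essentially_kato S \<longleftrightarrow> (\<exists>M N. reducing_pair S M N \<and> kato_on S M \<and> fin_dim N \<and> nilpotent_on S N)"

definition kato :: "('a::cbanach \<Rightarrow> 'a) \<Rightarrow> bool" where
  "kato S \<longleftrightarrow> kato_on S UNIV"

definition has_gDR_M :: "('a::cbanach \<Rightarrow> 'a) \<Rightarrow> bool" where
  "has_gDR_M S \<longleftrightarrow> (\<exists>M N. reducing_pair S M N \<and> bounded_below_on S M \<and> riesz_on S N)"

definition spectrum :: "('a::cbanach \<Rightarrow> 'a) \<Rightarrow> complex set" where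
  "spectrum T = spectrum_on T UNIV"

definition sigma_ap :: "('a::cbanach \<Rightarrow> 'a) \<Rightarrow> complex set" where
  "sigma_ap T = {z. \<not> bounded_below_on (opshift T z) UNIV}"

definition sigma_ec :: "('a::cbanach \<Rightarrow> 'a) \<Rightarrow> complex set" where
  "sigma_ec T = {z. \<not> closed (range (opshift T z))}"

definition sigma_gKR :: "('a::cbanach \<Rightarrow> 'a) \<Rightarrow> complex set" where
  "sigma_gKR T = {z. \<not> has_GKRD (opshift T z)}"

definition sigma_gK :: "('a::cbanach \<Rightarrow> 'a) \<Rightarrow> complex set" where
  "sigma_gK T = {z. \<not> has_GKD (opshift T z)}"

definition sigma_Kt :: "('a::cbanach \<Rightarrow> 'a) \<Rightarrow> complex set" where
  "sigma_Kt T = {z. \<not> kato_type (opshift T z)}"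

definition sigma_eK :: "('a::cbanach \<Rightarrow> 'a) \<Rightarrow> complex set" where
  "sigma_eK T = {z. \<not> essentially_kato (opshift T z)}"

definition sigma_K :: "('a::cbanach \<Rightarrow> 'a) \<Rightarrow> complex set" where
  "sigma_K T = {z. \<not> kato (opshift T z)}"

definition sigma_gDRM :: "('a::cbanach \<Rightarrow> 'a) \<Rightarrow> complex set" where
  "sigma_gDRM T = {z. \<not> has_gDR_M (opshift T z)}"

end

theory Submission
  imports Defs
begin

interpretation cv: vector_space "scaleC :: complex \<Rightarrow> 'a \<Rightarrow> 'a::cbanach"
  by unfold_locales (simp_all add: scaleC_add_right scaleC_add_left scaleC_scaleC scaleC_one)

lemma csubspace_cv: "csubspace = cv.subspace"
  by (rule ext) (simp add: csubspace_def cv.subspace_def)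

lemma cspan_cv: "cspan = cv.span"
  by (rule ext) (simp add: cspan_def cv.span_def csubspace_cv)

lemma bounded_linear_scaleC_right: "bounded_linear (\<lambda>x::'a::cbanach. c *\<^sub>C x)"
proof (rule bounded_linear_intro[where K="cmod c"])
  show "c *\<^sub>C (x + y) = c *\<^sub>C x + c *\<^sub>C y" for x y :: 'a by (rule scaleC_add_right)
  show "c *\<^sub>C (r *\<^sub>R x) = r *\<^sub>R (c *\<^sub>C x)" for r and x :: 'a
    by (simp add: scaleR_scaleC scaleC_scaleC mult.commute)
  show "norm (c *\<^sub>C x) \<le> norm x * cmod c" for x :: 'a by (simp add: norm_scaleC)
qed

lemma bcl_bl: "bounded_clinear A \<Longrightarrow> bounded_linear A"
  by (simp add: bounded_clinear_def)

lemma bcl_scaleC: "bounded_clinear A \<Longrightarrow> A (c *\<^sub>C x) = c *\<^sub>C A x"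
  by (simp add: bounded_clinear_def)

lemma bcl_0: "bounded_clinear A \<Longrightarrow> A 0 = 0"
  using bcl_bl linear_0 bounded_linear.linear by blast

lemma bcl_add: "bounded_clinear A \<Longrightarrow> A (x + y) = A x + A y"
  using bcl_bl bounded_linear.linear linear_add by blast

lemma bcl_diff: "bounded_clinear A \<Longrightarrow> A (x - y) = A x - A y"
  using bcl_bl bounded_linear.linear linear_diff by blast

lemma bcl_minus: "bounded_clinear A \<Longrightarrow> A (- x) = - A x"
  using bcl_bl bounded_linear.linear linear_neg by blast

lemma bcl_cv: "bounded_clinear A \<Longrightarrow> Vector_Spaces.linear scaleC scaleC A"
  by (simp add: Vector_Spaces.linear_iff bcl_add bcl_scaleC cv.vector_space_axioms)

lemma bcl_comp: "bounded_clinear A \<Longrightarrow> bounded_clinear B \<Longrightarrow> bounded_clinear (A \<circ> B)"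
  unfolding bounded_clinear_def using bounded_linear_compose by (auto simp: o_def)

lemma bcl_id: "bounded_clinear (id :: 'a::cbanach \<Rightarrow> 'a)"
  unfolding bounded_clinear_def by (simp add: bounded_linear_ident id_def)

lemma bcl_funpow: "bounded_clinear A \<Longrightarrow> bounded_clinear (A ^^ n)"
  by (induction n) (simp_all add: bcl_id bcl_comp)

lemma bcl_opshift: "bounded_clinear A \<Longrightarrow> bounded_clinear (opshift A z)"
  unfolding bounded_clinear_def opshift_def
  by (auto intro!: bounded_linear_sub bounded_linear_scaleC_right
       simp: scaleC_scaleC mult.commute cv.scale_right_diff_distrib)

lemma opshift_opshift: "opshift (opshift A a) b = opshift A (a + b)"
  by (rule ext) (simp add: opshift_def scaleC_add_left)

lemma opshift_0: "opshift A 0 = A"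
  by (rule ext) (simp add: opshift_def)

lemma csub_0: "csubspace M \<Longrightarrow> 0 \<in> M" by (simp add: csubspace_def)
lemma csub_add: "csubspace M \<Longrightarrow> x \<in> M \<Longrightarrow> y \<in> M \<Longrightarrow> x + y \<in> M" by (simp add: csubspace_def)
lemma csub_scaleC: "csubspace M \<Longrightarrow> x \<in> M \<Longrightarrow> c *\<^sub>C x \<in> M" by (simp add: csubspace_def)
lemma csub_minus: "csubspace M \<Longrightarrow> x \<in> M \<Longrightarrow> - x \<in> M"
  unfolding csubspace_cv by (rule cv.subspace_neg)
lemma csub_diff: "csubspace M \<Longrightarrow> x \<in> M \<Longrightarrow> y \<in> M \<Longrightarrow> x - y \<in> M"
  unfolding csubspace_cv by (rule cv.subspace_diff)
lemma csub_scaleR: "csubspace M \<Longrightarrow> x \<in> M \<Longrightarrow> r *\<^sub>R x \<in> M"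
  by (simp add: csub_scaleC scaleR_scaleC)
lemma csub_UNIV: "csubspace UNIV" by (simp add: csubspace_def)
lemma csub_zero: "csubspace {0}"
  by (simp add: csubspace_def cv.scale_zero_right)

lemma csub_image: "bounded_clinear A \<Longrightarrow> csubspace M \<Longrightarrow> csubspace (A ` M)"
proof -
  assume A: "bounded_clinear A" and M: "csubspace M"
  show ?thesis unfolding csubspace_def
  proof (intro conjI ballI allI)
    show "0 \<in> A ` M" using bcl_0[OF A] csub_0[OF M] by (metis image_eqI)
    fix x y assume "x \<in> A ` M" "y \<in> A ` M"
    then obtain a b where "a \<in> M" "b \<in> M" "x = A a" "y = A b" by blast
    then show "x + y \<in> A ` M" using bcl_add[OF A, of a b] csub_add[OF M] by (metis image_eqI)
  next
    fix c x assume "x \<in> A ` M"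
    then obtain a where "a \<in> M" "x = A a" by blast
    then show "c *\<^sub>C x \<in> A ` M" using bcl_scaleC[OF A, of c a] csub_scaleC[OF M] by (metis image_eqI)
  qed
qed

lemma csub_kernel: "bounded_clinear A \<Longrightarrow> csubspace M \<Longrightarrow> csubspace {x\<in>M. A x = 0}"
  unfolding csubspace_def by (auto simp: bcl_0 bcl_add bcl_scaleC cv.scale_zero_right)

lemma csub_sum: "csubspace M \<Longrightarrow> finite I \<Longrightarrow> (\<And>i. i \<in> I \<Longrightarrow> f i \<in> M) \<Longrightarrow> sum f I \<in> M"
  unfolding csubspace_cv by (rule cv.subspace_sum)

lemma opshift_apply: "opshift A z x = A x - z *\<^sub>C x" by (simp add: opshift_def)

lemma closed_seq: "closed (S::'a::first_countable_topology set) \<Longrightarrow> (\<And>n. x n \<in> S) \<Longrightarrow> x \<longlonglongrightarrow> l \<Longrightarrow> l \<in> S"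
  using closed_sequential_limits[of S] by blast

lemma suminf_in_closed:
  assumes "closed Y" "csubspace Y" "summable f" "\<And>n. f n \<in> Y"
  shows "suminf f \<in> Y"
proof (rule closed_seq[OF assms(1) _ summable_LIMSEQ[OF assms(3)]])
  show "(\<Sum>i<n. f i) \<in> Y" for n using csub_sum[OF assms(2)] assms(4) by blast
qed

lemma bb_closed_image:
  fixes A :: "'a::cbanach \<Rightarrow> 'a"
  assumes A: "bounded_linear A" and Y: "closed Y" and c: "c > 0"
    and bb: "\<And>x x'. x \<in> Y \<Longrightarrow> x' \<in> Y \<Longrightarrow> c * norm (x - x') \<le> norm (A x - A x')"
  shows "closed (A ` Y)"
proof (unfold closed_sequential_limits, intro allI impI, elim conjE)
  fix z l assume zY: "\<forall>n. z n \<in> A ` Y" and zl: "z \<longlonglongrightarrow> l"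
  have "\<forall>n. \<exists>x. x \<in> Y \<and> A x = z n"
  proof
    fix n from zY obtain x where "x \<in> Y" "z n = A x" by blast
    then show "\<exists>x. x \<in> Y \<and> A x = z n" by auto
  qed
  then obtain y where y0: "\<forall>n. y n \<in> Y \<and> A (y n) = z n" using choice[of "\<lambda>n x. x \<in> Y \<and> A x = z n"] by blast
  then have y: "\<And>n. y n \<in> Y" "\<And>n. A (y n) = z n" by auto
  have "Cauchy z" using zl by (rule LIMSEQ_imp_Cauchy)
  have "Cauchy y"
  proof (rule CauchyI)
    fix e :: real assume "e > 0"
    then have "c * e > 0" using c by simp
    from CauchyD[OF \<open>Cauchy z\<close> this] obtain M where
      M: "\<forall>m\<ge>M. \<forall>n\<ge>M. norm (z m - z n) < c * e" by blast
    have "norm (y m - y n) < e" if "m \<ge> M" "n \<ge> M" for m n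
    proof -
      have "c * norm (y m - y n) \<le> norm (A (y m) - A (y n))" by (rule bb[OF y(1) y(1)])
      also have "\<dots> = norm (z m - z n)" using y(2) by simp
      also have "\<dots> < c * e" using M that by blast
      finally show ?thesis using c by simp
    qed
    then show "\<exists>M. \<forall>m\<ge>M. \<forall>n\<ge>M. norm (y m - y n) < e" by blast
  qed
  moreover have "complete Y" using Y complete_eq_closed by blast
  ultimately obtain l' where l': "l' \<in> Y" "y \<longlonglongrightarrow> l'"
    using y(1) unfolding complete_def by blast
  have "(\<lambda>n. A (y n)) \<longlonglongrightarrow> A l'" using bounded_linear.tendsto[OF A l'(2)] .
  then have "l = A l'" using zl y(2) LIMSEQ_unique by auto
  then show "l \<in> A ` Y" using l' by blast
qed

lemma open_mapping:
  fixes A :: "'a::cbanach \<Rightarrow> 'a"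
  assumes A: "bounded_clinear A" and Y: "closed Y" "csubspace Y" and Zc: "closed (A ` Y)"
  shows "\<exists>C>0. \<forall>z\<in>A ` Y. \<exists>y\<in>Y. A y = z \<and> norm y \<le> C * norm z"
proof -
  define Z where "Z = A ` Y"
  have Zs: "csubspace Z" using csub_image[OF A Y(2)] Z_def by simp
  have lin: "bounded_linear A" using A bcl_bl by blast
  define F where "F k = Z \<inter> closure (A ` (Y \<inter> cball 0 (real k)))" for k :: nat
  have UF: "\<Union> (range F) = Z"
  proof
    show "\<Union> (range F) \<subseteq> Z" by (auto simp: F_def)
    show "Z \<subseteq> \<Union> (range F)"
    proof
      fix z assume "z \<in> Z"
      then obtain y where y: "y \<in> Y" "z = A y" by (auto simp: Z_def)
      obtain k :: nat where "norm y \<le> real k" using real_arch_simple by blast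
      then have "z \<in> A ` (Y \<inter> cball 0 (real k))" using y by auto
      then have "z \<in> F k" using \<open>z\<in>Z\<close> closure_subset[of "A ` (Y \<inter> cball 0 (real k))"] by (auto simp: F_def)
      then show "z \<in> \<Union> (range F)" by blast
    qed
  qed
  have "\<exists>k. (top_of_set Z) interior_of (F k) \<noteq> {}"
  proof (rule ccontr)
    assume H: "\<not> (\<exists>k. (top_of_set Z) interior_of (F k) \<noteq> {})"
    have "(top_of_set Z) interior_of \<Union>(range F) = {}"
    proof (rule Baire_category_alt)
      have Zcl: "closed Z" using Zc by (simp only: Z_def)
      have "closedin euclidean Z" using Zcl closed_closedin by blast
      then have "completely_metrizable_space (top_of_set Z)"
        by (rule completely_metrizable_space_closedin[OF completely_metrizable_space_euclidean])
      then show "completely_metrizable_space (top_of_set Z) \<or>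
          locally_compact_space (top_of_set Z) \<and> regular_space (top_of_set Z)" by (rule disjI1)
      show "countable (range F)" by simp
      show "closedin (top_of_set Z) T \<and> (top_of_set Z) interior_of T = {}" if TF: "T \<in> range F" for T
      proof -
        obtain j where j: "T = F j" using TF by blast
        have "closedin (top_of_set Z) (Z \<inter> closure (A ` (Y \<inter> cball 0 (real j))))"
          by (rule closedin_closed_Int[OF closed_closure])
        moreover have "(top_of_set Z) interior_of (F j) = {}" using H by blast
        ultimately show ?thesis using j by (simp only: F_def)
      qed
    qed
    moreover have "(top_of_set Z) interior_of Z = Z"
      using interior_of_topspace[of "top_of_set Z"] by simp
    moreover have "0 \<in> Z" using csub_0[OF Zs] .
    ultimately show False using UF by simp
  qed
  then obtain k z0 where z0: "z0 \<in> (top_of_set Z) interior_of (F k)" by blast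
  have "openin (top_of_set Z) ((top_of_set Z) interior_of (F k))" by (rule openin_interior_of)
  then obtain r where r: "r > 0" "\<forall>z'\<in>Z. dist z' z0 < r \<longrightarrow> z' \<in> (top_of_set Z) interior_of (F k)"
    using z0 unfolding openin_euclidean_subtopology_iff by blast
  have sub: "(top_of_set Z) interior_of (F k) \<subseteq> F k" by (rule interior_of_subset)
  have z0F: "z0 \<in> F k" using z0 sub by blast
  then have z0Z: "z0 \<in> Z" by (simp add: F_def)
  have step3: "\<exists>y\<in>Y. norm y \<le> 2 * real k \<and> norm (A y - z) < e" if zZ: "z \<in> Z" "norm z < r" and e: "e > 0" for z e
  proof -
    have "z0 + z \<in> Z" using csub_add[OF Zs z0Z zZ(1)] .
    moreover have "dist (z0 + z) z0 < r" using zZ(2) by (simp add: dist_norm)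
    ultimately have "z0 + z \<in> F k" using r sub by blast
    then have "z0 + z \<in> closure (A ` (Y \<inter> cball 0 (real k)))" by (simp add: F_def)
    moreover have "e/2 > 0" using e by simp
    ultimately obtain w1 where w1: "w1 \<in> A ` (Y \<inter> cball 0 (real k))" "dist w1 (z0 + z) < e/2"
      unfolding closure_approachable by blast
    have "z0 \<in> closure (A ` (Y \<inter> cball 0 (real k)))" using z0F by (simp add: F_def)
    then obtain w2 where w2: "w2 \<in> A ` (Y \<inter> cball 0 (real k))" "dist w2 z0 < e/2"
      using \<open>e/2>0\<close> unfolding closure_approachable by blast
    obtain y1 where y1: "y1 \<in> Y" "norm y1 \<le> real k" "w1 = A y1" using w1(1) by auto
    obtain y2 where y2: "y2 \<in> Y" "norm y2 \<le> real k" "w2 = A y2" using w2(1) by auto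
    have "y1 - y2 \<in> Y" using csub_diff[OF Y(2) y1(1) y2(1)] .
    moreover have "norm (y1 - y2) \<le> 2 * real k"
      using norm_triangle_ineq4[of y1 y2] y1(2) y2(2) by simp
    moreover have "A (y1 - y2) - z = (w1 - (z0 + z)) - (w2 - z0)"
      using y1(3) y2(3) bcl_diff[OF A] by (simp add: algebra_simps)
    then have "norm (A (y1 - y2) - z) \<le> dist w1 (z0 + z) + dist w2 z0"
      using norm_triangle_ineq4[of "w1 - (z0 + z)" "w2 - z0"] by (simp only: dist_norm)
    then have "norm (A (y1 - y2) - z) < e" using w1(2) w2(2) by simp
    ultimately show ?thesis by blast
  qed
  define K where "K = 4 * real k / r"
  have K0: "K \<ge> 0" using r by (simp add: K_def)
  have approx: "\<exists>y. y \<in> Y \<and> norm y \<le> K * norm z \<and> norm (z - A y) \<le> norm z / 2" if zZ: "z \<in> Z" for z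
  proof (cases "z = 0")
    case True then show ?thesis using csub_0[OF Y(2)] bcl_0[OF A] by (intro exI[of _ 0]) auto
  next
    case False
    define t where "t = r / (2 * norm z)"
    have t: "t > 0" using r False by (simp add: t_def)
    have tz: "t *\<^sub>R z \<in> Z" using csub_scaleR[OF Zs zZ] .
    have ntz: "norm (t *\<^sub>R z) = r / 2" using False t r by (simp add: t_def)
    have "norm (t *\<^sub>R z) < r" "r / 4 > 0" using ntz r by auto
    from step3[OF tz this(1) this(2)] obtain y' where
      y': "y' \<in> Y" "norm y' \<le> 2 * real k" "norm (A y' - t *\<^sub>R z) < r / 4" by blast
    define y where "y = (1/t) *\<^sub>R y'"
    have yY: "y \<in> Y" using csub_scaleR[OF Y(2) y'(1)] y_def by simp
    have Ay: "A y = (1/t) *\<^sub>R A y'" using bcl_scaleC[OF A] by (simp add: y_def scaleR_scaleC)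
    have "norm y = norm y' / t" using t by (simp add: y_def)
    also have "\<dots> \<le> 2 * real k / t" using y'(2) t by (simp add: divide_right_mono)
    also have "\<dots> = K * norm z" using r False by (simp add: t_def K_def field_simps)
    finally have ny: "norm y \<le> K * norm z" .
    have "z - A y = (1/t) *\<^sub>R (t *\<^sub>R z - A y')" using t by (simp add: Ay algebra_simps)
    then have "norm (z - A y) = norm (t *\<^sub>R z - A y') / t" using t by simp
    also have "\<dots> < (r/4) / t" using divide_strict_right_mono[OF y'(3) t] by (simp add: norm_minus_commute)
    also have "\<dots> = norm z / 2" using r False by (simp add: t_def field_simps)
    finally show ?thesis using yY ny by (intro exI[of _ y]) auto
  qed
  then have "\<forall>z\<in>Z. \<exists>y. y \<in> Y \<and> norm y \<le> K * norm z \<and> norm (z - A y) \<le> norm z / 2" by blast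
  from bchoice[OF this] obtain g where
    g: "\<forall>z\<in>Z. g z \<in> Y \<and> norm (g z) \<le> K * norm z \<and> norm (z - A (g z)) \<le> norm z / 2" by blast
  show ?thesis
  proof (intro exI[of _ "2*K + 1"] conjI ballI)
    show "2*K+1 > 0" using K0 by simp
    fix z assume "z \<in> A ` Y" then have zZ: "z \<in> Z" by (simp add: Z_def)
    define h where "h w = w - A (g w)" for w
    define zs where "zs n = (h ^^ n) z" for n
    have zsS: "zs (Suc n) = zs n - A (g (zs n))" for n by (simp add: zs_def h_def)
    have zsZ: "zs n \<in> Z" for n
    proof (induction n)
      case 0 then show ?case using zZ by (simp add: zs_def)
    next
      case (Suc n)
      have "g (zs n) \<in> Y" using g Suc by blast
      then have "A (g (zs n)) \<in> Z" unfolding Z_def by (rule imageI)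
      then show ?case using zsS csub_diff[OF Zs Suc] by simp
    qed
    have zsn: "norm (zs n) \<le> norm z * (1/2)^n" for n
    proof (induction n)
      case 0 then show ?case by (simp add: zs_def)
    next
      case (Suc n)
      have "norm (zs (Suc n)) \<le> norm (zs n) / 2" using g zsZ[of n] zsS by simp
      then show ?case using Suc by simp
    qed
    define ys where "ys n = g (zs n)" for n
    have ysY: "ys n \<in> Y" for n using g zsZ by (simp add: ys_def)
    have nys: "norm (ys n) \<le> K * norm z * (1/2)^n" for n
    proof -
      have "norm (ys n) \<le> K * norm (zs n)" using g zsZ by (simp add: ys_def)
      also have "\<dots> \<le> K * (norm z * (1/2)^n)" using mult_left_mono[OF zsn K0] .
      finally show ?thesis by simp
    qed
    have sg: "summable (\<lambda>n. K * norm z * (1/2::real)^n)"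
      by (intro summable_mult summable_geometric) simp
    have sn: "summable (\<lambda>n. norm (ys n))"
      by (rule summable_comparison_test[OF _ sg]) (use nys in auto)
    have s: "summable ys" by (rule summable_norm_cancel[OF sn])
    define y where "y = suminf ys"
    have yY: "y \<in> Y" using suminf_in_closed[OF Y s ysY] y_def by simp
    have "norm y \<le> (\<Sum>n. norm (ys n))" using summable_norm[OF sn] y_def by simp
    also have "\<dots> \<le> (\<Sum>n. K * norm z * (1/2)^n)" by (rule suminf_le[OF nys sn sg])
    also have "\<dots> = K * norm z * 2"
      using suminf_mult[OF summable_geometric[of "1/2::real"]] suminf_geometric[of "1/2::real"] by simp
    also have "\<dots> \<le> (2*K+1) * norm z" by (simp add: algebra_simps)
    finally have ny: "norm y \<le> (2*K+1) * norm z" .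
    have Ays: "A (ys n) = zs n - zs (Suc n)" for n by (simp add: ys_def zsS)
    have "(\<lambda>n. norm z * (1/2::real)^n) \<longlonglongrightarrow> 0"
      by (intro tendsto_mult_right_zero LIMSEQ_power_zero) simp
    then have "zs \<longlonglongrightarrow> 0" by (rule Lim_null_comparison[rotated]) (use zsn in auto)
    then have "(\<lambda>n. zs n - zs (Suc n)) sums (zs 0 - 0)" by (rule telescope_sums')
    then have "(\<lambda>n. A (ys n)) sums z" using Ays by (simp add: zs_def)
    moreover have "A y = (\<Sum>n. A (ys n))" using bounded_linear.suminf[OF lin s] y_def by simp
    ultimately have "A y = z" using sums_unique by metis
    then show "\<exists>y\<in>Y. A y = z \<and> norm y \<le> (2 * K + 1) * norm z" using yY ny by blast
  qed
qed

lemma inj_closed_bb: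
  fixes A :: "'a::cbanach \<Rightarrow> 'a"
  assumes A: "bounded_clinear A" and Y: "closed Y" "csubspace Y" and Zc: "closed (A ` Y)"
    and inj: "\<And>x. x \<in> Y \<Longrightarrow> A x = 0 \<Longrightarrow> x = 0"
  shows "\<exists>c>0. \<forall>x\<in>Y. c * norm x \<le> norm (A x)"
proof -
  obtain C where C: "C > 0" "\<forall>z\<in>A ` Y. \<exists>y\<in>Y. A y = z \<and> norm y \<le> C * norm z"
    using open_mapping[OF A Y Zc] by blast
  have "(1/C) * norm x \<le> norm (A x)" if x: "x \<in> Y" for x
  proof -
    obtain y where y: "y \<in> Y" "A y = A x" "norm y \<le> C * norm (A x)" using C(2) x by blast
    have "A (y - x) = 0" using y(2) bcl_diff[OF A] by simp
    then have "y = x" using inj[OF csub_diff[OF Y(2) y(1) x]] by simp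
    then show ?thesis using y(3) C(1) by (simp add: field_simps)
  qed
  then show ?thesis using C(1) by (intro exI[of _ "1/C"]) auto
qed

lemma bb_kernel:
  assumes A: "bounded_clinear A" and "c > 0" "\<forall>x\<in>Y. c * norm x \<le> norm (A x)" "x \<in> Y" "A x = 0"
  shows "x = 0"
  using assms by (metis mult_le_0_iff norm_eq_zero norm_ge_zero order_antisym_conv order_less_le norm_zero)

lemma bb_diff:
  assumes A: "bounded_clinear A" and Y: "csubspace Y" and bb: "\<forall>x\<in>Y. c * norm x \<le> norm (A x)"
    and "x \<in> Y" "x' \<in> Y"
  shows "c * norm (x - x') \<le> norm (A x - A x')"
  using bb csub_diff[OF Y assms(4,5)] bcl_diff[OF A] by metis

lemma bb_closed:
  fixes A :: "'a::cbanach \<Rightarrow> 'a"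
  assumes A: "bounded_clinear A" and Y: "closed Y" "csubspace Y" and c: "c > 0"
    and bb: "\<forall>x\<in>Y. c * norm x \<le> norm (A x)"
  shows "closed (A ` Y)"
  by (rule bb_closed_image[OF bcl_bl[OF A] Y(1) c]) (rule bb_diff[OF A Y(2) bb])

lemma invertible_onI:
  fixes A :: "'a::cbanach \<Rightarrow> 'a"
  assumes A: "bounded_clinear A" and N: "closed N" "csubspace N" and AN: "A ` N \<subseteq> N"
    and inj: "\<And>x. x \<in> N \<Longrightarrow> A x = 0 \<Longrightarrow> x = 0" and surj: "N \<subseteq> A ` N"
  shows "invertible_on A N"
proof -
  have eq: "A ` N = N" using AN surj by blast
  obtain c where c: "c > 0" "\<forall>x\<in>N. c * norm x \<le> norm (A x)"
    using inj_closed_bb[OF A N] eq N(1) inj by auto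
  have injon: "inj_on A N"
  proof (rule inj_onI)
    fix x y assume "x \<in> N" "y \<in> N" "A x = A y"
    then have "A (x - y) = 0" using bcl_diff[OF A] by simp
    then show "x = y" using inj[OF csub_diff[OF N(2)]] \<open>x\<in>N\<close> \<open>y\<in>N\<close> by simp
  qed
  define R where "R = inv_into N A"
  have R1: "R y \<in> N" "A (R y) = y" if "y \<in> N" for y
    using that eq inv_into_into[of y A N] f_inv_into_f[of y A N] by (auto simp: R_def)
  have R2: "R (A x) = x" if "x \<in> N" for x using inv_into_f_f[OF injon that] by (simp add: R_def)
  have R3: "norm (R y) \<le> (1/c) * norm y" if "y \<in> N" for y
    using c(2) R1[OF that] c(1) by (auto simp: field_simps)
  show ?thesis unfolding invertible_on_def
    using R1 R2 R3 AN by (intro exI[of _ R]) blast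
qed

lemma invertible_onD:
  fixes A :: "'a::cbanach \<Rightarrow> 'a"
  assumes A: "bounded_clinear A" and N: "csubspace N" and "invertible_on A N"
  shows "\<And>x. x \<in> N \<Longrightarrow> A x = 0 \<Longrightarrow> x = 0" "N \<subseteq> A ` N"
proof -
  obtain R where R: "R ` N \<subseteq> N" "\<forall>x\<in>N. R (A x) = x \<and> A (R x) = x"
    using assms(3) unfolding invertible_on_def by blast
  have "R 0 = 0" using R(2) csub_0[OF N] bcl_0[OF A] by metis
  then show "\<And>x. x \<in> N \<Longrightarrow> A x = 0 \<Longrightarrow> x = 0" using R(2) by metis
  show "N \<subseteq> A ` N" using R by (metis image_subset_iff subsetI imageI)
qed

lemma perturb_surj:
  fixes A :: "'a::cbanach \<Rightarrow> 'a"
  assumes A: "bounded_clinear A" and N: "closed N" "csubspace N" and AN: "A ` N \<subseteq> N"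
    and c: "c > 0" and bb: "\<forall>x\<in>N. c * norm x \<le> norm (A x)" and surj: "N \<subseteq> A ` N"
    and d: "cmod \<delta> < c"
  shows "N \<subseteq> opshift A \<delta> ` N"
proof
  fix n assume n: "n \<in> N"
  have eq: "A ` N = N" using AN surj by blast
  define R where "R = inv_into N A"
  have R1: "R y \<in> N" "A (R y) = y" if "y \<in> N" for y
    using that eq inv_into_into[of y A N] f_inv_into_f[of y A N] by (auto simp: R_def)
  define f where "f x = R (n + \<delta> *\<^sub>C x)" for x
  have fN: "f ` N \<subseteq> N" using R1(1) csub_add[OF N(2) n] csub_scaleC[OF N(2)] by (auto simp: f_def)
  have lip: "dist (f x) (f y) \<le> (cmod \<delta> / c) * dist x y" if "x \<in> N" "y \<in> N" for x y
  proof -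
    have u: "n + \<delta> *\<^sub>C x \<in> N" "n + \<delta> *\<^sub>C y \<in> N"
      using csub_add[OF N(2) n] csub_scaleC[OF N(2)] that by auto
    have "c * norm (f x - f y) \<le> norm (A (f x) - A (f y))"
      by (rule bb_diff[OF A N(2) bb]) (use R1 u in \<open>auto simp: f_def\<close>)
    also have "\<dots> = norm (\<delta> *\<^sub>C x - \<delta> *\<^sub>C y)" using R1(2)[OF u(1)] R1(2)[OF u(2)] by (simp add: f_def)
    also have "\<dots> = cmod \<delta> * norm (x - y)" by (metis cv.scale_right_diff_distrib norm_scaleC)
    finally show ?thesis using c by (simp add: dist_norm field_simps)
  qed
  have "complete N" using N(1) complete_eq_closed by blast
  moreover have "N \<noteq> {}" using n by blast
  moreover have "0 \<le> cmod \<delta> / c" "cmod \<delta> / c < 1" using c d by auto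
  ultimately obtain x where x: "x \<in> N" "f x = x" using Banach_fix[OF _ _ _ _ fN lip] by blast
  have "A x = n + \<delta> *\<^sub>C x" using R1(2)[of "n + \<delta> *\<^sub>C x"] x csub_add[OF N(2) n] csub_scaleC[OF N(2)]
    by (metis f_def)
  then have "opshift A \<delta> x = n" by (simp add: opshift_def)
  then show "n \<in> opshift A \<delta> ` N" using x(1) by blast
qed

lemma bb_shift:
  fixes A :: "'a::cbanach \<Rightarrow> 'a"
  assumes bb: "\<forall>x\<in>N. c * norm x \<le> norm (A x)"
  shows "\<forall>x\<in>N. (c - cmod \<delta>) * norm x \<le> norm (opshift A \<delta> x)"
proof
  fix x assume "x \<in> N"
  have "norm (A x) \<le> norm (opshift A \<delta> x) + norm (\<delta> *\<^sub>C x)"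
    using norm_triangle_ineq[of "opshift A \<delta> x" "\<delta> *\<^sub>C x"] by (simp add: opshift_def)
  then show "(c - cmod \<delta>) * norm x \<le> norm (opshift A \<delta> x)"
  proof -
    have "c * norm x \<le> norm (A x)" using bb \<open>x\<in>N\<close> by blast
    then show ?thesis using \<open>norm (A x) \<le> _\<close> by (simp add: norm_scaleC algebra_simps)
  qed
qed

definition splus :: "'a::cbanach set \<Rightarrow> 'a set \<Rightarrow> 'a set" where
  "splus W U = {r + y |r y. r \<in> W \<and> y \<in> U}"

lemma csub_splus: "csubspace W \<Longrightarrow> csubspace U \<Longrightarrow> csubspace (splus W U)"
  unfolding csubspace_def splus_def
proof (intro conjI ballI allI; elim conjE)
  assume W: "0 \<in> W" "\<forall>x\<in>W. \<forall>y\<in>W. x + y \<in> W" "\<forall>c. \<forall>x\<in>W. c *\<^sub>C x \<in> W"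
    and U: "0 \<in> U" "\<forall>x\<in>U. \<forall>y\<in>U. x + y \<in> U" "\<forall>c. \<forall>x\<in>U. c *\<^sub>C x \<in> U"
  show "0 \<in> {r + y |r y. r \<in> W \<and> y \<in> U}" using W U by force
  fix x y assume "x \<in> {r + y |r y. r \<in> W \<and> y \<in> U}" "y \<in> {r + y |r y. r \<in> W \<and> y \<in> U}"
  then obtain a b a' b' where "x = a + b" "y = a' + b'" "a \<in> W" "b \<in> U" "a' \<in> W" "b' \<in> U" by blast
  moreover have "x + y = (a + a') + (b + b')" using calculation by (simp add: algebra_simps)
  ultimately show "x + y \<in> {r + y |r y. r \<in> W \<and> y \<in> U}" using W U by blast
next
  fix c x
  assume W: "0 \<in> W" "\<forall>x\<in>W. \<forall>y\<in>W. x + y \<in> W" "\<forall>c. \<forall>x\<in>W. c *\<^sub>C x \<in> W"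
    and U: "0 \<in> U" "\<forall>x\<in>U. \<forall>y\<in>U. x + y \<in> U" "\<forall>c. \<forall>x\<in>U. c *\<^sub>C x \<in> U"
  assume "x \<in> {r + y |r y. r \<in> W \<and> y \<in> U}"
  then obtain a b where "x = a + b" "a \<in> W" "b \<in> U" by blast
  moreover have "c *\<^sub>C x = c *\<^sub>C a + c *\<^sub>C b" using calculation by (simp add: scaleC_add_right)
  ultimately show "c *\<^sub>C x \<in> {r + y |r y. r \<in> W \<and> y \<in> U}" using W U by blast
qed

lemma bounded_linear_scaleC_left: "bounded_linear (\<lambda>k. k *\<^sub>C (b::'a::cbanach))"
proof (rule bounded_linear_intro[where K="norm b"])
  show "(x + y) *\<^sub>C b = x *\<^sub>C b + y *\<^sub>C b" for x y by (rule scaleC_add_left)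
  show "(r *\<^sub>R x) *\<^sub>C b = r *\<^sub>R (x *\<^sub>C b)" for r x
    by (simp add: scaleR_scaleC scaleC_scaleC scaleC_complex_def)
  show "norm (x *\<^sub>C b) \<le> norm x * norm b" for x by (simp add: norm_scaleC)
qed

lemma closed_plus_line:
  fixes V :: "'a::cbanach set"
  assumes V: "closed V" "csubspace V"
  shows "closed {v + k *\<^sub>C b |v k. v \<in> V}"
proof (cases "b \<in> V")
  case True
  have "{v + k *\<^sub>C b |v k. v \<in> V} = V"
  proof
    show "{v + k *\<^sub>C b |v k. v \<in> V} \<subseteq> V" using csub_add[OF V(2)] csub_scaleC[OF V(2) True] by blast
    show "V \<subseteq> {v + k *\<^sub>C b |v k. v \<in> V}"
    proof
      fix v assume "v \<in> V" then show "v \<in> {v + k *\<^sub>C b |v k. v \<in> V}"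
        by (intro CollectI exI[of _ v] exI[of _ 0]) (simp add: cv.scale_zero_left)
    qed
  qed
  then show ?thesis using V(1) by simp
next
  case False
  define d where "d = infdist b V"
  have d: "d > 0" unfolding d_def using infdist_pos_not_in_closed[OF V(1) _ False] csub_0[OF V(2)] by blast
  have key: "cmod k * d \<le> norm (v + k *\<^sub>C b)" if "v \<in> V" for v k
  proof (cases "k = 0")
    case True then show ?thesis by simp
  next
    case False
    have m: "- ((1/k) *\<^sub>C v) \<in> V" using csub_minus[OF V(2) csub_scaleC[OF V(2) that]] .
    have "v + k *\<^sub>C b = k *\<^sub>C ((1/k) *\<^sub>C v + b)" using False
      by (simp add: scaleC_add_right scaleC_scaleC scaleC_one)
    then have "norm (v + k *\<^sub>C b) = cmod k * dist b (- ((1/k) *\<^sub>C v))"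
      by (simp add: norm_scaleC dist_norm add.commute)
    moreover have "d \<le> dist b (- ((1/k) *\<^sub>C v))" unfolding d_def by (rule infdist_le[OF m])
    ultimately show ?thesis by (simp add: mult_left_mono)
  qed
  show ?thesis
  proof (unfold closed_sequential_limits, intro allI impI, elim conjE)
    fix s z assume sS: "\<forall>n. s n \<in> {v + k *\<^sub>C b |v k. v \<in> V}" and sz: "s \<longlonglongrightarrow> z"
    have "\<forall>n. \<exists>p. fst p \<in> V \<and> s n = fst p + snd p *\<^sub>C b"
    proof
      fix n from sS obtain v k where "v \<in> V" "s n = v + k *\<^sub>C b" by blast
      then show "\<exists>p. fst p \<in> V \<and> s n = fst p + snd p *\<^sub>C b" by (intro exI[of _ "(v,k)"]) simp
    qed
    then obtain p where p: "\<forall>n. fst (p n) \<in> V \<and> s n = fst (p n) + snd (p n) *\<^sub>C b" by metis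
    define v where "v n = fst (p n)" for n
    define k where "k n = snd (p n)" for n
    have vV: "v n \<in> V" and sv: "s n = v n + k n *\<^sub>C b" for n using p by (auto simp: v_def k_def)
    have "Cauchy s" using sz by (rule LIMSEQ_imp_Cauchy)
    have "Cauchy k"
    proof (rule CauchyI)
      fix e :: real assume "e > 0"
      then have "d * e > 0" using d by simp
      from CauchyD[OF \<open>Cauchy s\<close> this] obtain M where
        M: "\<forall>m\<ge>M. \<forall>n\<ge>M. norm (s m - s n) < d * e" by blast
      have "norm (k m - k n) < e" if "m \<ge> M" "n \<ge> M" for m n
      proof -
        have "s m - s n = (v m - v n) + (k m - k n) *\<^sub>C b"
          using sv by (simp add: algebra_simps cv.scale_left_diff_distrib)
        then have "cmod (k m - k n) * d \<le> norm (s m - s n)"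
          using key[OF csub_diff[OF V(2) vV vV]] by simp
        also have "\<dots> < d * e" using M that by blast
        finally show ?thesis using d by (simp add: mult.commute)
      qed
      then show "\<exists>M. \<forall>m\<ge>M. \<forall>n\<ge>M. norm (k m - k n) < e" by blast
    qed
    then obtain kk where kk: "k \<longlonglongrightarrow> kk" using Cauchy_convergent_iff convergent_def by blast
    have "(\<lambda>n. k n *\<^sub>C b) \<longlonglongrightarrow> kk *\<^sub>C b"
      using bounded_linear.tendsto[OF bounded_linear_scaleC_left kk] .
    then have "(\<lambda>n. s n - k n *\<^sub>C b) \<longlonglongrightarrow> z - kk *\<^sub>C b" using sz by (intro tendsto_diff)
    moreover have "s n - k n *\<^sub>C b = v n" for n using sv by simp
    ultimately have "v \<longlonglongrightarrow> z - kk *\<^sub>C b" by simp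
    then have "z - kk *\<^sub>C b \<in> V" by (rule closed_seq[OF V(1) vV])
    moreover have "z = (z - kk *\<^sub>C b) + kk *\<^sub>C b" by simp
    ultimately show "z \<in> {v + k *\<^sub>C b |v k. v \<in> V}" by blast
  qed
qed

lemma csub_cspan: "csubspace (cspan B)"
  by (simp add: csubspace_cv cspan_cv)

lemma splus_zero: "splus W {0} = W"
  by (auto simp: splus_def)

lemma splus_insert:
  "splus W (cspan (insert b B)) = {v + k *\<^sub>C b |v k. v \<in> splus W (cspan B)}"
proof
  show "splus W (cspan (insert b B)) \<subseteq> {v + k *\<^sub>C b |v k. v \<in> splus W (cspan B)}"
  proof
    fix x assume "x \<in> splus W (cspan (insert b B))"
    then obtain w y where wy: "x = w + y" "w \<in> W" "y \<in> cspan (insert b B)" by (auto simp: splus_def)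
    then obtain k where k: "y - k *\<^sub>C b \<in> cspan B" by (auto simp: cspan_cv cv.span_insert)
    have "w + (y - k *\<^sub>C b) \<in> splus W (cspan B)" using wy k by (auto simp: splus_def)
    moreover have "x = (w + (y - k *\<^sub>C b)) + k *\<^sub>C b" using wy by simp
    ultimately show "x \<in> {v + k *\<^sub>C b |v k. v \<in> splus W (cspan B)}" by blast
  qed
  show "{v + k *\<^sub>C b |v k. v \<in> splus W (cspan B)} \<subseteq> splus W (cspan (insert b B))"
  proof
    fix x assume "x \<in> {v + k *\<^sub>C b |v k. v \<in> splus W (cspan B)}"
    then obtain v k where vk: "x = v + k *\<^sub>C b" "v \<in> splus W (cspan B)" by blast
    then obtain w y where wy: "v = w + y" "w \<in> W" "y \<in> cspan B" by (auto simp: splus_def)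
    have "y + k *\<^sub>C b - k *\<^sub>C b \<in> cspan B" using wy(3) by simp
    then have "y + k *\<^sub>C b \<in> cspan (insert b B)" unfolding cspan_cv cv.span_insert by blast
    moreover have "x = w + (y + k *\<^sub>C b)" using vk wy by (simp add: add.assoc)
    ultimately show "x \<in> splus W (cspan (insert b B))" using wy(2) by (auto simp: splus_def)
  qed
qed

lemma closed_splus_span:
  fixes W :: "'a::cbanach set"
  assumes W: "closed W" "csubspace W" and B: "finite B"
  shows "closed (splus W (cspan B))"
  using B
proof (induction B rule: finite_induct)
  case empty
  then show ?case using W(1) by (simp add: cspan_cv splus_zero)
next
  case (insert b B)
  have "csubspace (splus W (cspan B))" using csub_splus[OF W(2) csub_cspan] .
  then show ?case using closed_plus_line[OF insert.IH] by (simp add: splus_insert)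
qed

lemma closed_image_superkernel:
  fixes A :: "'a::cbanach \<Rightarrow> 'a"
  assumes A: "bounded_clinear A" and N: "closed N" "csubspace N" and Nc: "closed (A ` N)"
    and W: "W \<subseteq> N" "closed W" "csubspace W" and ker: "{x\<in>N. A x = 0} \<subseteq> W"
  shows "closed (A ` W)"
proof -
  obtain C where C: "C > 0" "\<forall>z\<in>A ` N. \<exists>y\<in>N. A y = z \<and> norm y \<le> C * norm z"
    using open_mapping[OF A N Nc] by blast
  show ?thesis
  proof (unfold closed_sequential_limits, intro allI impI, elim conjE)
    fix s z assume sW: "\<forall>n. s n \<in> A ` W" and sz: "s \<longlonglongrightarrow> z"
    have "\<forall>n. \<exists>w. w \<in> W \<and> s n = A w" using sW by blast
    then obtain w where w: "\<forall>n. w n \<in> W \<and> s n = A (w n)" by metis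
    have "z \<in> A ` N" using closed_seq[OF Nc, of s z] sW W(1) sz by blast
    then obtain v where v: "v \<in> N" "z = A v" by blast
    have "\<forall>n. \<exists>u. u \<in> N \<and> A u = s n - z \<and> norm u \<le> C * norm (s n - z)"
    proof
      fix n
      have "s n - z = A (w n - v)" using w v bcl_diff[OF A] by simp
      moreover have "w n - v \<in> N" using w W(1) v csub_diff[OF N(2)] by blast
      ultimately have "s n - z \<in> A ` N" by blast
      then show "\<exists>u. u \<in> N \<and> A u = s n - z \<and> norm u \<le> C * norm (s n - z)" using C(2) by blast
    qed
    then obtain u where u: "\<forall>n. u n \<in> N \<and> A (u n) = s n - z \<and> norm (u n) \<le> C * norm (s n - z)" by metis
    have "(\<lambda>n. s n - z) \<longlonglongrightarrow> 0" using sz by (simp add: LIM_zero)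
    then have "(\<lambda>n. C * norm (s n - z)) \<longlonglongrightarrow> 0"
      by (intro tendsto_mult_right_zero tendsto_norm_zero)
    then have u0: "u \<longlonglongrightarrow> 0" by (rule Lim_null_comparison[rotated]) (use u in auto)
    have inW: "v + u n \<in> W" for n
    proof -
      have "w n - v - u n \<in> N" using w W(1) v u csub_diff[OF N(2)] by blast
      moreover have "A (w n - v - u n) = 0" using w v u bcl_diff[OF A] by simp
      ultimately have "w n - v - u n \<in> W" using ker by blast
      moreover have "v + u n = w n - (w n - v - u n)" by simp
      ultimately show ?thesis using w csub_diff[OF W(3)] by metis
    qed
    have "(\<lambda>n. v + u n) \<longlonglongrightarrow> v + 0" using u0 by (intro tendsto_add tendsto_const)
    then have "v \<in> W" using closed_seq[OF W(2) inW] by simp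
    then show "z \<in> A ` W" using v by blast
  qed
qed

lemma funpow_img_sub:
  assumes "A ` Y \<subseteq> Y" shows "(A ^^ n) ` Y \<subseteq> Y"
  by (induction n) (use assms in auto)

lemma kato_eigen:
  fixes A :: "'a::cbanach \<Rightarrow> 'a"
  assumes A: "bounded_clinear A" and Y: "closed Y" "csubspace Y" and AY: "A ` Y \<subseteq> Y"
    and Yc: "closed (A ` Y)"
    and ker: "\<forall>n. {x\<in>Y. A x = 0} \<subseteq> (A ^^ n) ` Y"
    and x0: "x0 \<in> Y" "A x0 = 0" "x0 \<noteq> 0"
  shows "\<exists>r>0. \<forall>\<mu>. cmod \<mu> < r \<longrightarrow> (\<exists>y\<in>Y. y \<noteq> 0 \<and> opshift A \<mu> y = 0)"
proof -
  define Rinf where "Rinf = {x\<in>Y. \<forall>n. x \<in> (A ^^ n) ` Y}"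
  have csn: "csubspace ((A ^^ n) ` Y)" for n using csub_image[OF bcl_funpow[OF A] Y(2)] .
  have Rcs: "csubspace Rinf"
    unfolding csubspace_def
  proof (intro conjI ballI allI)
    show "0 \<in> Rinf" using csub_0[OF Y(2)] csub_0[OF csn] by (simp add: Rinf_def)
    fix x y assume "x \<in> Rinf" "y \<in> Rinf"
    then show "x + y \<in> Rinf" using csub_add[OF Y(2)] csub_add[OF csn] by (simp add: Rinf_def)
  next
    fix c x assume "x \<in> Rinf"
    then show "c *\<^sub>C x \<in> Rinf" using csub_scaleC[OF Y(2)] csub_scaleC[OF csn] by (simp add: Rinf_def)
  qed
  have kerR: "x \<in> Rinf" if "x \<in> Y" "A x = 0" for x using ker that by (auto simp: Rinf_def)
  have bk: "\<exists>w\<in>Rinf. A w = x" if xR: "x \<in> Rinf" for x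
  proof -
    have "\<forall>n. \<exists>a. a \<in> Y \<and> x = A ((A ^^ n) a)"
    proof
      fix n
      from xR have "x \<in> (A ^^ Suc n) ` Y" unfolding Rinf_def by blast
      then show "\<exists>a. a \<in> Y \<and> x = A ((A ^^ n) a)" by auto
    qed
    then obtain a where a: "\<forall>n. a n \<in> Y \<and> x = A ((A ^^ n) (a n))" by metis
    define w where "w n = (A ^^ n) (a n)" for n
    have wY: "w n \<in> (A ^^ n) ` Y" for n using a by (auto simp: w_def)
    have wY': "w n \<in> Y" for n using wY funpow_img_sub[OF AY] by blast
    have Aw: "A (w n) = x" for n using a by (simp add: w_def)
    have w0: "w 0 \<in> (A ^^ n) ` Y" for n
    proof -
      have "w n - w 0 \<in> Y" using csub_diff[OF Y(2) wY' wY'] .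
      moreover have "A (w n - w 0) = 0" using Aw bcl_diff[OF A] by simp
      ultimately have "w n - w 0 \<in> (A ^^ n) ` Y" using ker by blast
      then have "w n - (w n - w 0) \<in> (A ^^ n) ` Y" using csub_diff[OF csn wY] by blast
      then show ?thesis by simp
    qed
    have "w 0 \<in> Rinf" using w0 wY' by (auto simp: Rinf_def)
    then show ?thesis using Aw by blast
  qed
  obtain C where C: "C > 0" "\<forall>z\<in>A ` Y. \<exists>y\<in>Y. A y = z \<and> norm y \<le> C * norm z"
    using open_mapping[OF A Y Yc] by blast
  have back2: "\<exists>y. y \<in> Rinf \<and> A y = x \<and> norm y \<le> C * norm x" if xR: "x \<in> Rinf" for x
  proof -
    obtain w where w: "w \<in> Rinf" "A w = x" using bk[OF xR] by blast
    have wY: "w \<in> Y" using w by (simp add: Rinf_def)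
    then have "x \<in> A ` Y" using w by blast
    then obtain y where y: "y \<in> Y" "A y = x" "norm y \<le> C * norm x" using C(2) by blast
    have "y - w \<in> Rinf" using kerR[OF csub_diff[OF Y(2) y(1) wY]] y(2) w(2) bcl_diff[OF A] by simp
    then have "(y - w) + w \<in> Rinf" using csub_add[OF Rcs _ w(1)] by blast
    then show ?thesis using y by auto
  qed
  then have "\<forall>x\<in>Rinf. \<exists>y. y \<in> Rinf \<and> A y = x \<and> norm y \<le> C * norm x" by blast
  from bchoice[OF this] obtain g where g: "\<forall>x\<in>Rinf. g x \<in> Rinf \<and> A (g x) = x \<and> norm (g x) \<le> C * norm x"
    by blast
  define xs where "xs n = (g ^^ n) x0" for n
  have x0R: "x0 \<in> Rinf" using kerR x0 by blast
  have xsR: "xs n \<in> Rinf" for n by (induction n) (use x0R g in \<open>auto simp: xs_def\<close>)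
  have xsY: "xs n \<in> Y" for n using xsR by (simp add: Rinf_def)
  have Axs: "A (xs (Suc n)) = xs n" for n using g xsR[of n] by (simp add: xs_def)
  have nxs: "norm (xs n) \<le> norm x0 * C ^ n" for n
  proof (induction n)
    case 0 then show ?case by (simp add: xs_def)
  next
    case (Suc n)
    have "norm (xs (Suc n)) \<le> C * norm (xs n)" using g xsR[of n] by (simp add: xs_def)
    also have "\<dots> \<le> C * (norm x0 * C ^ n)" using Suc C(1) by (simp add: mult_left_mono)
    finally show ?case by (simp add: algebra_simps)
  qed
  show ?thesis
  proof (intro exI[of _ "1 / (2 * C)"] conjI allI impI)
    show "1 / (2 * C) > 0" using C by simp
    fix \<mu> :: complex assume mu: "cmod \<mu> < 1 / (2 * C)"
    define q where "q = cmod \<mu> * C"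
    have q: "0 \<le> q" "q < 1/2" using mu C(1) by (auto simp: q_def field_simps)
    define f where "f n = \<mu> ^ n *\<^sub>C xs n" for n
    have nf: "norm (f n) \<le> norm x0 * q ^ n" for n
    proof -
      have "norm (f n) = cmod \<mu> ^ n * norm (xs n)" by (simp add: f_def norm_scaleC norm_power)
      also have "\<dots> \<le> cmod \<mu> ^ n * (norm x0 * C ^ n)" using nxs by (simp add: mult_left_mono)
      also have "\<dots> = norm x0 * q ^ n" by (simp add: q_def power_mult_distrib)
      finally show ?thesis .
    qed
    have sg: "summable (\<lambda>n. norm x0 * q ^ n)" using q by (intro summable_mult summable_geometric) simp
    have sf: "summable f"
      by (rule summable_norm_cancel, rule summable_comparison_test[OF _ sg]) (use nf in auto)
    define y where "y = suminf f"
    have fY: "f n \<in> Y" for n using csub_scaleC[OF Y(2) xsY] by (simp add: f_def)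
    have yY: "y \<in> Y" using suminf_in_closed[OF Y sf fY] by (simp add: y_def)
    have lin: "bounded_linear A" using bcl_bl[OF A] .
    have sAf: "summable (\<lambda>n. A (f n))" using bounded_linear.summable[OF lin sf] .
    have Ay: "A y = (\<Sum>n. A (f n))" using bounded_linear.suminf[OF lin sf] by (simp add: y_def)
    also have "\<dots> = (\<Sum>n. A (f (Suc n))) + A (f 0)" using suminf_split_head[OF sAf] by simp
    also have "A (f 0) = 0" using x0 by (simp add: f_def xs_def)
    also have "(\<lambda>n. A (f (Suc n))) = (\<lambda>n. \<mu> *\<^sub>C f n)"
      by (rule ext) (simp add: f_def bcl_scaleC[OF A] Axs scaleC_scaleC)
    also have "(\<Sum>n. \<mu> *\<^sub>C f n) = \<mu> *\<^sub>C y"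
      using bounded_linear.suminf[OF bounded_linear_scaleC_right sf] by (simp add: y_def)
    finally have "A y = \<mu> *\<^sub>C y" by simp
    then have op: "opshift A \<mu> y = 0" by (simp add: opshift_def)
    have nfs: "norm (f (Suc n)) \<le> norm x0 * q * q ^ n" for n using nf[of "Suc n"] by (simp add: algebra_simps)
    have sfs: "summable (\<lambda>n. norm (f (Suc n)))"
      by (rule summable_comparison_test[OF _ summable_mult[OF summable_geometric[of q], of "norm x0 * q"]])
         (use nfs q in auto)
    have "y - x0 = (\<Sum>n. f (Suc n))" using suminf_split_head[OF sf] by (simp add: y_def f_def xs_def)
    then have "norm (y - x0) \<le> (\<Sum>n. norm (f (Suc n)))" using summable_norm[OF sfs] by simp
    also have "\<dots> \<le> (\<Sum>n. norm x0 * q * q ^ n)"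
      by (rule suminf_le[OF _ sfs summable_mult[OF summable_geometric]]) (use nfs q in auto)
    also have "\<dots> = norm x0 * q / (1 - q)"
      using suminf_mult[OF summable_geometric[of q], of "norm x0 * q"] suminf_geometric[of q] q by simp
    also have "\<dots> < norm x0"
    proof -
      have "q / (1 - q) < 1" using q by (simp add: field_simps)
      moreover have "norm x0 > 0" using x0 by simp
      ultimately show ?thesis by (simp add: mult_strict_left_mono[of "q/(1-q)" 1 "norm x0", simplified] )
    qed
    finally have "y \<noteq> 0" by auto
    then show "\<exists>y\<in>Y. y \<noteq> 0 \<and> opshift A \<mu> y = 0" using yY op by blast
  qed
qed

lemma cspan_minimal: "B \<subseteq> M \<Longrightarrow> csubspace M \<Longrightarrow> cspan B \<subseteq> M"
  unfolding cspan_cv csubspace_cv by (rule cv.span_minimal)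

lemma cspan_superset: "B \<subseteq> cspan B"
  unfolding cspan_cv by (rule cv.span_superset)

lemma cspan_image:
  assumes A: "bounded_clinear A"
  shows "cspan (A ` B) = A ` cspan B"
proof
  show "cspan (A ` B) \<subseteq> A ` cspan B"
  proof (rule cspan_minimal)
    show "A ` B \<subseteq> A ` cspan B" using cspan_superset[of B] by (rule image_mono)
    show "csubspace (A ` cspan B)" by (rule csub_image[OF A csub_cspan])
  qed
  have "csubspace {x. A x \<in> cspan (A ` B)}"
    unfolding csubspace_def
  proof (intro conjI ballI allI)
    show "0 \<in> {x. A x \<in> cspan (A ` B)}" using csub_0[OF csub_cspan] by (simp add: bcl_0[OF A])
    fix x y assume "x \<in> {x. A x \<in> cspan (A ` B)}" "y \<in> {x. A x \<in> cspan (A ` B)}"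
    then show "x + y \<in> {x. A x \<in> cspan (A ` B)}" using csub_add[OF csub_cspan] by (simp add: bcl_add[OF A])
  next
    fix c x assume "x \<in> {x. A x \<in> cspan (A ` B)}"
    then show "c *\<^sub>C x \<in> {x. A x \<in> cspan (A ` B)}" using csub_scaleC[OF csub_cspan] by (simp add: bcl_scaleC[OF A])
  qed
  moreover have "B \<subseteq> {x. A x \<in> cspan (A ` B)}" using cspan_superset[of "A ` B"] by blast
  ultimately have "cspan B \<subseteq> {x. A x \<in> cspan (A ` B)}" using cspan_minimal by blast
  then show "A ` cspan B \<subseteq> cspan (A ` B)" by blast
qed

lemma cspan_mono: "B \<subseteq> B' \<Longrightarrow> cspan B \<subseteq> cspan B'"
  unfolding cspan_cv by (rule cv.span_mono)

lemma punctured_clopen: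
  fixes c :: real and P :: "complex \<Rightarrow> bool"
  defines "D \<equiv> ball 0 c - {0}"
  assumes loc: "\<And>\<nu>. \<nu> \<in> D \<Longrightarrow> \<exists>e>0. \<forall>\<nu>'\<in>D. dist \<nu>' \<nu> < e \<longrightarrow> (P \<nu>' \<longleftrightarrow> P \<nu>)"
    and ex: "\<nu>0 \<in> D" "P \<nu>0"
  shows "\<forall>\<nu>\<in>D. P \<nu>"
proof -
  have "cmod \<nu>0 < c" using ex(1) by (simp add: D_def)
  then have "c > 0" using norm_ge_zero[of \<nu>0] by linarith
  have "aff_dim (ball (0::complex) c) = 2" using aff_dim_open[of "ball (0::complex) c"] \<open>c>0\<close> by simp
  then have conn: "connected D" unfolding D_def by (intro connected_punctured_convex) auto
  define T where "T = {\<nu>\<in>D. P \<nu>}"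
  have op: "openin (top_of_set D) T"
    unfolding openin_euclidean_subtopology_iff
  proof (intro conjI ballI)
    show "T \<subseteq> D" by (auto simp: T_def)
    fix x assume "x \<in> T"
    then have xD: "x \<in> D" "P x" by (auto simp: T_def)
    from loc[OF xD(1)] obtain e where "e > 0" "\<forall>\<nu>'\<in>D. dist \<nu>' x < e \<longrightarrow> (P \<nu>' \<longleftrightarrow> P x)" by blast
    then show "\<exists>e>0. \<forall>x'\<in>D. dist x' x < e \<longrightarrow> x' \<in> T" using xD unfolding T_def by blast
  qed
  have op2: "openin (top_of_set D) (D - T)"
    unfolding openin_euclidean_subtopology_iff
  proof (intro conjI ballI)
    show "D - T \<subseteq> D" by auto
    fix x assume "x \<in> D - T"
    then have xD: "x \<in> D" "\<not> P x" by (auto simp: T_def)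
    from loc[OF xD(1)] obtain e where "e > 0" "\<forall>\<nu>'\<in>D. dist \<nu>' x < e \<longrightarrow> (P \<nu>' \<longleftrightarrow> P x)" by blast
    then show "\<exists>e>0. \<forall>x'\<in>D. dist x' x < e \<longrightarrow> x' \<in> D - T" using xD unfolding T_def by blast
  qed
  have TD: "T \<subseteq> D" unfolding T_def by blast
  have cl: "closedin (top_of_set D) T" unfolding closedin_def using op2 TD by simp
  have "T = {} \<or> T = D" using conn op cl unfolding connected_clopen by presburger
  moreover have "\<nu>0 \<in> T" using ex by (simp add: T_def)
  ultimately have "T = D" by blast
  then show ?thesis unfolding T_def by blast
qed

lemma funpow_Suc_img: "(A ^^ Suc n) ` N = A ` ((A ^^ n) ` N)"
  by (simp add: image_comp)

lemma fred_R:
  fixes A :: "'a::cbanach \<Rightarrow> 'a"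
  assumes A: "bounded_clinear A" and N: "closed N" "csubspace N" and AN: "A ` N \<subseteq> N"
    and F: "fredholm_on A N"
  shows "closed ((A ^^ n) ` N) \<and> (\<exists>B. finite B \<and> B \<subseteq> N \<and> N \<subseteq> splus ((A ^^ n) ` N) (cspan B))"
proof -
  define ker where "ker = {x\<in>N. A x = 0}"
  have kcs: "csubspace ker" unfolding ker_def by (rule csub_kernel[OF A N(2)])
  obtain Bk where Bk: "finite Bk" "Bk \<subseteq> ker" "ker \<subseteq> cspan Bk"
    using F unfolding fredholm_on_def fin_dim_def ker_def by blast
  have Nc: "closed (A ` N)" using F unfolding fredholm_on_def by blast
  obtain B0 where B0: "finite B0" "B0 \<subseteq> N" "N \<subseteq> splus (A ` N) (cspan B0)"
    using F unfolding fredholm_on_def splus_def by blast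
  have spk: "cspan Bk \<subseteq> ker" using cspan_minimal[OF Bk(2) kcs] .
  have kN: "ker \<subseteq> N" by (auto simp: ker_def)
  have Rsub: "(A ^^ m) ` N \<subseteq> N" for m by (rule funpow_img_sub[OF AN])
  have Rcs: "csubspace ((A ^^ m) ` N)" for m by (rule csub_image[OF bcl_funpow[OF A] N(2)])
  show ?thesis
  proof (induction n)
    case 0
    have "N \<subseteq> splus N (cspan {})" by (simp add: cspan_cv splus_zero)
    then show ?case using N(1) by (intro conjI exI[of _ "{}"]) auto
  next
    case (Suc n)
    define R where "R = (A ^^ n) ` N"
    obtain Bn where Bn: "finite Bn" "Bn \<subseteq> N" "N \<subseteq> splus R (cspan Bn)" and Rc: "closed R"
      using Suc unfolding R_def by blast
    have RS: "(A ^^ Suc n) ` N = A ` R" unfolding R_def by (rule funpow_Suc_img)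
    define W where "W = splus R (cspan Bk)"
    have Wc: "closed W" unfolding W_def by (rule closed_splus_span[OF Rc Rcs[of n, folded R_def] Bk(1)])
    have Wcs: "csubspace W" unfolding W_def by (rule csub_splus[OF Rcs[of n, folded R_def] csub_cspan])
    have WN: "W \<subseteq> N"
      unfolding W_def splus_def using Rsub[of n, folded R_def] spk kN csub_add[OF N(2)] by blast
    have kW: "{x\<in>N. A x = 0} \<subseteq> W"
    proof
      fix x assume "x \<in> {x\<in>N. A x = 0}"
      then have "x \<in> cspan Bk" using Bk(3) by (auto simp: ker_def)
      moreover have "0 \<in> R" using csub_0[OF Rcs[of n]] by (simp add: R_def)
      ultimately show "x \<in> W" unfolding W_def splus_def by force
    qed
    have cAW: "closed (A ` W)" by (rule closed_image_superkernel[OF A N Nc WN Wc Wcs kW])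
    have AW: "A ` W = A ` R"
    proof
      show "A ` W \<subseteq> A ` R"
      proof
        fix y assume "y \<in> A ` W"
        then obtain r s where rs: "y = A (r + s)" "r \<in> R" "s \<in> cspan Bk" unfolding W_def splus_def by blast
        have "A s = 0" using spk rs(3) by (auto simp: ker_def)
        then have "y = A r" using rs bcl_add[OF A] by simp
        then show "y \<in> A ` R" using rs(2) by blast
      qed
      show "A ` R \<subseteq> A ` W"
      proof
        fix y assume "y \<in> A ` R"
        then obtain r where r: "y = A r" "r \<in> R" by blast
        have "r + 0 \<in> W" unfolding W_def splus_def using r(2) csub_0[OF csub_cspan] by blast
        then show "y \<in> A ` W" using r by force
      qed
    qed
    have closedS: "closed ((A ^^ Suc n) ` N)" using cAW AW RS by simp
    define B' where "B' = A ` Bn \<union> B0"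
    have "A ` Bn \<subseteq> N" using Bn(2) AN by blast
    then have B': "finite B'" "B' \<subseteq> N" using Bn B0 by (auto simp: B'_def)
    have "N \<subseteq> splus ((A ^^ Suc n) ` N) (cspan B')"
    proof
      fix x assume "x \<in> N"
      then obtain a s0 where as: "x = a + s0" "a \<in> A ` N" "s0 \<in> cspan B0" using B0(3) unfolding splus_def by blast
      then obtain y where y: "a = A y" "y \<in> N" by blast
      then obtain r s where rs: "y = r + s" "r \<in> R" "s \<in> cspan Bn" using Bn(3) unfolding splus_def by blast
      have "A s \<in> cspan (A ` Bn)" using rs(3) cspan_image[OF A, of Bn] by blast
      then have As: "A s \<in> cspan B'" using cspan_mono[of "A ` Bn" B'] by (auto simp: B'_def)
      have s0': "s0 \<in> cspan B'" using as(3) cspan_mono[of B0 B'] by (auto simp: B'_def)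
      have "x = A r + (A s + s0)" using as y rs bcl_add[OF A] by (simp add: add.assoc)
      moreover have "A r \<in> (A ^^ Suc n) ` N" using RS rs(2) by blast
      moreover have "A s + s0 \<in> cspan B'" using csub_add[OF csub_cspan As s0'] .
      ultimately show "x \<in> splus ((A ^^ Suc n) ` N) (cspan B')" unfolding splus_def by blast
    qed
    then show ?case using closedS B' by blast
  qed
qed

lemma chain_stab:
  fixes K :: "nat \<Rightarrow> 'a::cbanach set"
  assumes cs: "\<And>n. csubspace (K n)" and dec: "\<And>m n. m \<le> n \<Longrightarrow> K n \<subseteq> K m"
    and fin: "finite Bk" and sp: "\<And>n. K n \<subseteq> cspan Bk"
  shows "\<exists>n0. \<forall>n\<ge>n0. K n = K n0"
proof -
  obtain n0 where n0: "\<forall>m. cv.dim (K n0) \<le> cv.dim (K m)"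
    using ex_has_least_nat[of "\<lambda>_. True" 0 "\<lambda>n. cv.dim (K n)"] by blast
  have basis: "\<exists>B. B \<subseteq> K m \<and> cv.independent B \<and> K m \<subseteq> cv.span B \<and> card B = cv.dim (K m) \<and> finite B" for m
  proof -
    obtain B where B: "B \<subseteq> K m" "cv.independent B" "K m \<subseteq> cv.span B" "card B = cv.dim (K m)"
      using cv.basis_exists by blast
    have "B \<subseteq> cv.span Bk" using B(1) sp[of m] by (auto simp: cspan_cv)
    then have "finite B" using cv.independent_span_bound[OF fin B(2)] by blast
    then show ?thesis using B by blast
  qed
  have "K n0 \<subseteq> K n" if "n \<ge> n0" for n
  proof (rule ccontr)
    assume "\<not> K n0 \<subseteq> K n"
    then obtain v where v: "v \<in> K n0" "v \<notin> K n" by blast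
    obtain B where B: "B \<subseteq> K n" "cv.independent B" "K n \<subseteq> cv.span B" "card B = cv.dim (K n)" "finite B"
      using basis by blast
    have "cv.span B \<subseteq> K n" using cv.span_minimal[OF B(1)] cs[of n] by (simp add: csubspace_cv)
    then have "v \<notin> cv.span B" using v(2) by blast
    then have ind: "cv.independent (insert v B)" using cv.independent_insertI[OF _ B(2)] by blast
    have "v \<notin> B" using v(2) B(1) by blast
    then have cardi: "card (insert v B) = card B + 1" using B(5) by simp
    obtain B' where B': "B' \<subseteq> K n0" "cv.independent B'" "K n0 \<subseteq> cv.span B'" "card B' = cv.dim (K n0)" "finite B'"
      using basis by blast
    have "insert v B \<subseteq> cv.span B'" using B'(3) v(1) B(1) dec[OF that] by blast
    then have "card (insert v B) \<le> card B'" using cv.independent_span_bound[OF B'(5) ind] by blast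
    then show False using cardi B(4) B'(4) n0[rule_format, of n] by simp
  qed
  then show ?thesis using dec by blast
qed

lemma opshift_inv: "bounded_clinear A \<Longrightarrow> csubspace N \<Longrightarrow> A ` N \<subseteq> N \<Longrightarrow> opshift A \<nu> ` N \<subseteq> N"
proof
  fix y assume A: "bounded_clinear A" and N: "csubspace N" and AN: "A ` N \<subseteq> N" and y: "y \<in> opshift A \<nu> ` N"
  then obtain x where x: "x \<in> N" "y = opshift A \<nu> x" by blast
  have "A x \<in> N" using AN x(1) by blast
  moreover have "\<nu> *\<^sub>C x \<in> N" by (rule csub_scaleC[OF N x(1)])
  ultimately have "A x - \<nu> *\<^sub>C x \<in> N" by (rule csub_diff[OF N])
  then show "y \<in> N" using x(2) by (simp add: opshift_def)
qed

lemma funpow_add_img: "(A ^^ (m + k)) ` N = (A ^^ m) ` ((A ^^ k) ` N)"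
  by (simp add: funpow_add image_comp)

lemma fredholm_punctured:
  fixes A :: "'a::cbanach \<Rightarrow> 'a"
  assumes A: "bounded_clinear A" and N: "closed N" "csubspace N" and AN: "A ` N \<subseteq> N"
    and F: "fredholm_on A N"
    and res: "\<And>r. r > 0 \<Longrightarrow> \<exists>\<nu>. cmod \<nu> < r \<and> (\<forall>x\<in>N. opshift A \<nu> x = 0 \<longrightarrow> x = 0) \<and> N \<subseteq> opshift A \<nu> ` N"
  shows "\<exists>\<rho>>0. \<forall>\<nu>. 0 < cmod \<nu> \<and> cmod \<nu> < \<rho> \<longrightarrow> (\<forall>x\<in>N. opshift A \<nu> x = 0 \<longrightarrow> x = 0) \<and> N \<subseteq> opshift A \<nu> ` N"
proof -
  define R where "R n = (A ^^ n) ` N" for n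
  have Rcs: "csubspace (R n)" for n unfolding R_def by (rule csub_image[OF bcl_funpow[OF A] N(2)])
  have Rsub: "R n \<subseteq> N" for n unfolding R_def by (rule funpow_img_sub[OF AN])
  have Rdec: "R n \<subseteq> R m" if mn: "m \<le> n" for m n
  proof -
    obtain k where k: "n = m + k" using le_Suc_ex[OF mn] by blast
    have "R n = (A ^^ m) ` ((A ^^ k) ` N)" unfolding R_def k by (rule funpow_add_img)
    also have "\<dots> \<subseteq> (A ^^ m) ` N" by (rule image_mono[OF funpow_img_sub[OF AN]])
    also have "\<dots> = R m" unfolding R_def ..
    finally show ?thesis .
  qed
  have Rc: "closed (R n)" for n using fred_R[OF A N AN F] by (simp add: R_def)
  have Nc: "closed (A ` N)" using F unfolding fredholm_on_def by blast
  define ker where "ker = {x\<in>N. A x = 0}"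
  have kcs: "csubspace ker" unfolding ker_def by (rule csub_kernel[OF A N(2)])
  obtain Bk where Bk: "finite Bk" "Bk \<subseteq> ker" "ker \<subseteq> cspan Bk"
    using F unfolding fredholm_on_def fin_dim_def ker_def by blast
  define K where "K n = ker \<inter> R n" for n
  have Kcs: "csubspace (K n)" for n
  proof -
    have "cv.subspace ker" "cv.subspace (R n)" using kcs Rcs[of n] by (simp_all add: csubspace_cv)
    then show ?thesis unfolding K_def csubspace_cv by (rule cv.subspace_inter)
  qed
  have Kdec: "K n \<subseteq> K m" if "m \<le> n" for m n using Rdec[OF that] by (auto simp: K_def)
  have Ksp: "K n \<subseteq> cspan Bk" for n using Bk(3) by (auto simp: K_def)
  obtain n0 where n0: "\<forall>n\<ge>n0. K n = K n0"
    using chain_stab[of K Bk, OF Kcs Kdec Bk(1) Ksp] by blast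
  define Y where "Y = R n0"
  have Ycl: "closed Y" "csubspace Y" using Rc Rcs by (auto simp: Y_def)
  have YN: "Y \<subseteq> N" using Rsub by (simp add: Y_def)
  have AY: "A ` Y = R (Suc n0)" unfolding Y_def R_def by (rule funpow_Suc_img[symmetric])
  have AYY: "A ` Y \<subseteq> Y" using AY Rdec[of n0 "Suc n0"] by (simp add: Y_def)
  have AYc: "closed (A ` Y)" using AY Rc by simp
  have kerY: "\<forall>k. {x\<in>Y. A x = 0} \<subseteq> (A ^^ k) ` Y"
  proof (intro allI subsetI)
    fix k x assume "x \<in> {x\<in>Y. A x = 0}"
    then have x: "x \<in> Y" "A x = 0" by auto
    then have "x \<in> ker" using YN unfolding ker_def by blast
    moreover have "x \<in> R n0" using x(1) unfolding Y_def .
    ultimately have "x \<in> K n0" unfolding K_def by blast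
    moreover have "K (k + n0) = K n0" by (rule n0[rule_format]) simp
    ultimately have "x \<in> K (k + n0)" by simp
    then have "x \<in> R (k + n0)" by (simp add: K_def)
    then show "x \<in> (A ^^ k) ` Y" unfolding Y_def R_def using funpow_add_img[where A=A and m=k and k=n0 and N=N] by simp
  qed
  have injY: "x = 0" if xY: "x \<in> Y" "A x = 0" for x
  proof (rule ccontr)
    assume "x \<noteq> 0"
    obtain r where r: "r > 0" "\<forall>\<mu>. cmod \<mu> < r \<longrightarrow> (\<exists>y\<in>Y. y \<noteq> 0 \<and> opshift A \<mu> y = 0)"
      using kato_eigen[OF A Ycl AYY AYc kerY xY \<open>x \<noteq> 0\<close>] by blast
    obtain \<nu> where \<nu>: "cmod \<nu> < r" "\<forall>x\<in>N. opshift A \<nu> x = 0 \<longrightarrow> x = 0" using res[OF r(1)] by blast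
    obtain y where "y \<in> Y" "y \<noteq> 0" "opshift A \<nu> y = 0" using r(2) \<nu>(1) by blast
    then show False using \<nu>(2) YN by blast
  qed
  obtain c where c: "c > 0" "\<forall>x\<in>Y. c * norm x \<le> norm (A x)"
    using inj_closed_bb[OF A Ycl AYc] injY by blast
  have inj: "x = 0" if nu: "\<nu> \<noteq> 0" "cmod \<nu> < c" and x: "x \<in> N" "opshift A \<nu> x = 0" for \<nu> x
  proof -
    have Ax: "A x = \<nu> *\<^sub>C x" using x(2) by (simp add: opshift_def)
    have pw: "(A ^^ n) x = \<nu> ^ n *\<^sub>C x" for n
    proof (induction n)
      case 0 then show ?case by (simp add: scaleC_one)
    next
      case (Suc n)
      have "(A ^^ Suc n) x = A (\<nu> ^ n *\<^sub>C x)" using Suc by simp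
      also have "\<dots> = \<nu> ^ Suc n *\<^sub>C x" using bcl_scaleC[OF A] Ax by (simp add: scaleC_scaleC mult.commute)
      finally show ?case .
    qed
    have "x \<in> R n" for n
    proof -
      have "(A ^^ n) ((1/\<nu>) ^ n *\<^sub>C x) = (1/\<nu>) ^ n *\<^sub>C (\<nu> ^ n *\<^sub>C x)"
        using bcl_scaleC[OF bcl_funpow[OF A]] pw by simp
      also have "\<dots> = x" using nu(1) by (simp add: scaleC_scaleC power_mult_distrib[symmetric] scaleC_one)
      finally show ?thesis unfolding R_def using csub_scaleC[OF N(2) x(1)] by (metis imageI)
    qed
    then have "x \<in> Y" by (simp add: Y_def)
    then have "c * norm x \<le> norm (A x)" using c(2) by blast
    then have "c * norm x \<le> cmod \<nu> * norm x" using Ax by (simp add: norm_scaleC)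
    show ?thesis
    proof (rule ccontr)
      assume "x \<noteq> 0"
      then have "norm x > 0" by simp
      then have "c \<le> cmod \<nu>" using \<open>c * norm x \<le> cmod \<nu> * norm x\<close> by simp
      then show False using nu(2) by simp
    qed
  qed
  obtain B where B: "finite B" "B \<subseteq> N" "N \<subseteq> splus Y (cspan B)"
  proof -
    have "closed (R n0) \<and> (\<exists>B. finite B \<and> B \<subseteq> N \<and> N \<subseteq> splus (R n0) (cspan B))"
      using fred_R[OF A N AN F, of n0] unfolding R_def .
    then show ?thesis using that unfolding Y_def by blast
  qed
  have spBN: "cspan B \<subseteq> N" by (rule cspan_minimal[OF B(2) N(2)])
  have crng: "closed (opshift A \<nu> ` N)" if nu: "\<nu> \<noteq> 0" "cmod \<nu> < c" for \<nu>
  proof -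
    define S where "S = opshift A \<nu>"
    have S: "bounded_clinear S" using bcl_opshift[OF A] by (simp add: S_def)
    have bbY: "\<forall>x\<in>Y. (c - cmod \<nu>) * norm x \<le> norm (S x)" unfolding S_def by (rule bb_shift[OF c(2)])
    have SYc: "closed (S ` Y)" by (rule bb_closed[OF S Ycl _ bbY]) (use nu(2) in simp)
    have eq: "S ` N = splus (S ` Y) (cspan (S ` B))"
    proof
      show "S ` N \<subseteq> splus (S ` Y) (cspan (S ` B))"
      proof
        fix z assume "z \<in> S ` N"
        then obtain x where x: "x \<in> N" "z = S x" by blast
        then obtain y s where ys: "x = y + s" "y \<in> Y" "s \<in> cspan B" using B(3) unfolding splus_def by blast
        have "S s \<in> cspan (S ` B)" using ys(3) cspan_image[OF S, of B] by blast
        moreover have "z = S y + S s" using x ys bcl_add[OF S] by simp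
        ultimately show "z \<in> splus (S ` Y) (cspan (S ` B))" using ys(2) unfolding splus_def by blast
      qed
      show "splus (S ` Y) (cspan (S ` B)) \<subseteq> S ` N"
      proof
        fix z assume "z \<in> splus (S ` Y) (cspan (S ` B))"
        then obtain y t where yt: "z = S y + t" "y \<in> Y" "t \<in> cspan (S ` B)" unfolding splus_def by blast
        then obtain s where s: "t = S s" "s \<in> cspan B" using cspan_image[OF S, of B] by blast
        have "y + s \<in> N" using csub_add[OF N(2)] yt(2) YN s(2) spBN by blast
        moreover have "z = S (y + s)" using yt s bcl_add[OF S] by simp
        ultimately show "z \<in> S ` N" by blast
      qed
    qed
    have "finite (S ` B)" using B(1) by simp
    then have "closed (splus (S ` Y) (cspan (S ` B)))"
      by (rule closed_splus_span[OF SYc csub_image[OF S Ycl(2)]])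
    then show ?thesis using eq by (simp add: S_def)
  qed
  have bbN: "\<exists>b>0. \<forall>x\<in>N. b * norm x \<le> norm (opshift A \<nu> x)" if nu: "\<nu> \<noteq> 0" "cmod \<nu> < c" for \<nu>
    using inj_closed_bb[OF bcl_opshift[OF A] N crng[OF nu]] inj[OF nu] by blast
  define D where "D = ball (0::complex) c - {0}"
  have inD: "\<nu> \<in> D \<longleftrightarrow> \<nu> \<noteq> 0 \<and> cmod \<nu> < c" for \<nu> by (auto simp: D_def)
  have inv: "opshift A \<nu> ` N \<subseteq> N" for \<nu> by (rule opshift_inv[OF A N(2) AN])
  have loc: "\<exists>e>0. \<forall>\<nu>'\<in>D. dist \<nu>' \<nu> < e \<longrightarrow> (N \<subseteq> opshift A \<nu>' ` N \<longleftrightarrow> N \<subseteq> opshift A \<nu> ` N)"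
    if nuD: "\<nu> \<in> D" for \<nu>
  proof -
    obtain b where b: "b > 0" "\<forall>x\<in>N. b * norm x \<le> norm (opshift A \<nu> x)" using bbN nuD inD by blast
    have "\<forall>\<nu>'\<in>D. dist \<nu>' \<nu> < b/2 \<longrightarrow> (N \<subseteq> opshift A \<nu>' ` N \<longleftrightarrow> N \<subseteq> opshift A \<nu> ` N)"
    proof (intro ballI impI)
      fix \<nu>' assume "\<nu>' \<in> D" "dist \<nu>' \<nu> < b/2"
      define \<delta> where "\<delta> = \<nu>' - \<nu>"
      have d: "cmod \<delta> < b/2" using \<open>dist \<nu>' \<nu> < b/2\<close> by (simp add: \<delta>_def dist_norm)
      have e1: "opshift (opshift A \<nu>) \<delta> = opshift A \<nu>'" by (simp add: opshift_opshift \<delta>_def)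
      have e2: "opshift (opshift A \<nu>') (- \<delta>) = opshift A \<nu>" by (simp add: opshift_opshift \<delta>_def)
      show "N \<subseteq> opshift A \<nu>' ` N \<longleftrightarrow> N \<subseteq> opshift A \<nu> ` N"
      proof
        assume P': "N \<subseteq> opshift A \<nu>' ` N"
        have bb': "\<forall>x\<in>N. (b - cmod \<delta>) * norm x \<le> norm (opshift A \<nu>' x)"
          using bb_shift[OF b(2), of \<delta>] e1 by simp
        have "N \<subseteq> opshift (opshift A \<nu>') (- \<delta>) ` N"
        proof (rule perturb_surj[OF bcl_opshift[OF A] N inv _ bb' P'])
          have nn: "0 \<le> cmod \<delta>" "cmod (- \<delta>) = cmod \<delta>" by simp_all
          show "0 < b - cmod \<delta>" using d nn by linarith
          show "cmod (- \<delta>) < b - cmod \<delta>" using d nn by linarith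
        qed
        then show "N \<subseteq> opshift A \<nu> ` N" using e2 by simp
      next
        assume P: "N \<subseteq> opshift A \<nu> ` N"
        have "N \<subseteq> opshift (opshift A \<nu>) \<delta> ` N"
          by (rule perturb_surj[OF bcl_opshift[OF A] N inv b(1) b(2) P]) (use d b in auto)
        then show "N \<subseteq> opshift A \<nu>' ` N" using e1 by simp
      qed
    qed
    then show ?thesis using b(1) by (intro exI[of _ "b/2"]) auto
  qed
  have ex: "\<exists>\<nu>0. \<nu>0 \<in> D \<and> N \<subseteq> opshift A \<nu>0 ` N"
  proof -
    have "c/2 > 0" using c by simp
    from res[OF this] obtain \<nu> where \<nu>: "cmod \<nu> < c/2" "\<forall>x\<in>N. opshift A \<nu> x = 0 \<longrightarrow> x = 0" "N \<subseteq> opshift A \<nu> ` N"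
      by blast
    show ?thesis
    proof (cases "\<nu> = 0")
      case False
      then show ?thesis using \<nu> c inD by (intro exI[of _ \<nu>]) auto
    next
      case True
      then have Ainj: "\<forall>x\<in>N. A x = 0 \<longrightarrow> x = 0" and Asurj: "N \<subseteq> A ` N" using \<nu> by (simp_all add: opshift_0)
      obtain b0 where b0: "b0 > 0" "\<forall>x\<in>N. b0 * norm x \<le> norm (A x)"
        using inj_closed_bb[OF A N Nc] Ainj by blast
      define \<delta> where "\<delta> = complex_of_real (min b0 c / 2)"
      have d: "cmod \<delta> = min b0 c / 2" using b0(1) c(1) by (simp add: \<delta>_def)
      have "N \<subseteq> opshift A \<delta> ` N"
      proof (rule perturb_surj[OF A N AN b0(1) b0(2) Asurj])
        show "cmod \<delta> < b0" using d b0(1) c(1) by linarith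
      qed
      moreover have "cmod \<delta> < c" "cmod \<delta> > 0" using d b0(1) c(1) by auto
      then have "\<delta> \<noteq> 0" "cmod \<delta> < c" by auto
      then have "\<delta> \<in> D" using inD by blast
      ultimately show ?thesis by blast
    qed
  qed
  then obtain \<nu>0 where \<nu>0: "\<nu>0 \<in> D" "N \<subseteq> opshift A \<nu>0 ` N" by blast
  have all: "\<forall>\<nu>\<in>D. N \<subseteq> opshift A \<nu> ` N"
    using punctured_clopen[of c "\<lambda>\<nu>. N \<subseteq> opshift A \<nu> ` N", OF loc[unfolded D_def] \<nu>0[unfolded D_def]]
    unfolding D_def by blast
  show ?thesis
  proof (intro exI[of _ c] conjI allI impI)
    show "c > 0" by (rule c(1))
    fix \<nu> assume "0 < cmod \<nu> \<and> cmod \<nu> < c"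
    then have nu: "\<nu> \<noteq> 0" "cmod \<nu> < c" by auto
    show "\<forall>x\<in>N. opshift A \<nu> x = 0 \<longrightarrow> x = 0" using inj[OF nu] by blast
    show "N \<subseteq> opshift A \<nu> ` N" using all inD nu by blast
  qed
qed

lemma bcl_scaleC_right: "bounded_clinear (\<lambda>x::'a::cbanach. c *\<^sub>C x)"
  unfolding bounded_clinear_def
  by (simp add: bounded_linear_scaleC_right scaleC_scaleC mult.commute)

lemma bcl_sum: "bounded_clinear f \<Longrightarrow> f (\<Sum>i<(n::nat). g i) = (\<Sum>i<n. f (g i))"
  by (induction n) (simp_all add: bcl_0 bcl_add)

lemma scaleC_eq_0: "c \<noteq> 0 \<Longrightarrow> c *\<^sub>C (x::'a::cbanach) = 0 \<Longrightarrow> x = 0"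
  by (metis cv.scale_eq_0_iff)

lemma closed_zero: "closed {0::'a::cbanach}" by simp

lemma reducing_trivial:
  assumes S: "bounded_clinear S"
  shows "reducing_pair S UNIV {0}"
  unfolding reducing_pair_def using csub_UNIV csub_zero bcl_0[OF S] by auto

lemma fin_dim_zero: "fin_dim {0::'a::cbanach}"
  unfolding fin_dim_def by (intro exI[of _ "{}"]) (simp add: cspan_cv)

lemma nilp_quasi:
  fixes S :: "'a::cbanach \<Rightarrow> 'a"
  assumes S: "bounded_clinear S" and N: "closed N" "csubspace N" and SN: "S ` N \<subseteq> N"
    and nil: "nilpotent_on S N"
  shows "quasinilpotent_on S N"
  unfolding quasinilpotent_on_def spectrum_on_def
proof (rule subsetI, rule ccontr)
  fix z assume zs: "z \<in> {z. \<not> invertible_on (opshift S z) N}" and "z \<notin> {0}"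
  then have z: "z \<noteq> 0" by simp
  obtain n where n: "\<forall>x\<in>N. (S ^^ n) x = 0" using nil unfolding nilpotent_on_def by blast
  have pow: "(S ^^ k) x = z ^ k *\<^sub>C x" if Sx: "S x = z *\<^sub>C x" for x k
  proof (induction k)
    case 0 show ?case by (simp add: scaleC_one)
  next
    case (Suc k)
    have "(S ^^ Suc k) x = S ((S ^^ k) x)" by simp
    also have "\<dots> = S (z ^ k *\<^sub>C x)" using Suc by simp
    also have "\<dots> = z ^ k *\<^sub>C (z *\<^sub>C x)" by (simp add: bcl_scaleC[OF S] Sx)
    also have "\<dots> = z ^ Suc k *\<^sub>C x" by (simp add: scaleC_scaleC mult.commute)
    finally show ?case .
  qed
  have "invertible_on (opshift S z) N"
  proof (rule invertible_onI[OF bcl_opshift[OF S] N opshift_inv[OF S N(2) SN]])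
    fix x assume x: "x \<in> N" "opshift S z x = 0"
    then have "S x = z *\<^sub>C x" by (simp add: opshift_def)
    then have "(S ^^ n) x = z ^ n *\<^sub>C x" by (rule pow)
    then have "z ^ n *\<^sub>C x = 0" using n x(1) by simp
    moreover have "z ^ n \<noteq> 0" using z by simp
    ultimately show "x = 0" using scaleC_eq_0 by blast
  next
    show "N \<subseteq> opshift S z ` N"
    proof
      fix y assume y: "y \<in> N"
      define u where "u k = (1/z) ^ k *\<^sub>C (S ^^ k) y" for k
      have uN: "u k \<in> N" for k
      proof -
        have "(S ^^ k) y \<in> N" using funpow_img_sub[OF SN, of k] y by blast
        then show ?thesis unfolding u_def by (rule csub_scaleC[OF N(2)])
      qed
      have Su: "S (u k) = z *\<^sub>C u (Suc k)" for k
      proof -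
        have "S (u k) = (1/z) ^ k *\<^sub>C (S ^^ Suc k) y" by (simp add: u_def bcl_scaleC[OF S])
        moreover have "z *\<^sub>C u (Suc k) = (z * (1/z) ^ Suc k) *\<^sub>C (S ^^ Suc k) y"
          by (simp only: u_def scaleC_scaleC)
        moreover have "z * (1/z) ^ Suc k = (1/z) ^ k" using z by simp
        ultimately show ?thesis by simp
      qed
      have u0: "u 0 = y" by (simp add: u_def scaleC_one)
      have "(S ^^ n) y = 0" using n y by blast
      then have un: "u n = 0" by (simp add: u_def cv.scale_zero_right)
      define x where "x = - (\<Sum>k<n. (1/z) *\<^sub>C u k)"
      have "(\<Sum>k<n. (1/z) *\<^sub>C u k) \<in> N" by (rule csub_sum[OF N(2)]) (simp_all add: csub_scaleC[OF N(2) uN])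
      then have xN: "x \<in> N" unfolding x_def by (rule csub_minus[OF N(2)])
      have Sk: "S ((1/z) *\<^sub>C u k) = u (Suc k)" for k
      proof -
        have "S ((1/z) *\<^sub>C u k) = (1/z) *\<^sub>C (z *\<^sub>C u (Suc k))" by (simp add: bcl_scaleC[OF S] Su)
        also have "\<dots> = u (Suc k)" using z by (simp add: scaleC_scaleC scaleC_one)
        finally show ?thesis .
      qed
      have zk: "z *\<^sub>C ((1/z) *\<^sub>C u k) = u k" for k using z by (simp add: scaleC_scaleC scaleC_one)
      have "S x = - (\<Sum>k<n. S ((1/z) *\<^sub>C u k))"
        unfolding x_def bcl_minus[OF S] bcl_sum[OF S] ..
      also have "\<dots> = - (\<Sum>k<n. u (Suc k))" by (simp only: Sk)
      finally have Sx: "S x = - (\<Sum>k<n. u (Suc k))" .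
      have "z *\<^sub>C x = - (\<Sum>k<n. z *\<^sub>C ((1/z) *\<^sub>C u k))"
        unfolding x_def bcl_minus[OF bcl_scaleC_right] bcl_sum[OF bcl_scaleC_right] ..
      also have "\<dots> = - (\<Sum>k<n. u k)" by (simp only: zk)
      finally have zx: "z *\<^sub>C x = - (\<Sum>k<n. u k)" .
      have "opshift S z x = (\<Sum>k<n. u k) - (\<Sum>k<n. u (Suc k))" by (simp add: opshift_def Sx zx)
      also have "\<dots> = u 0 - u n" using sum_lessThan_telescope'[of u n] by (simp add: sum_subtractf)
      finally have "opshift S z x = y" using u0 un by simp
      then show "y \<in> opshift S z ` N" using xN by blast
    qed
  qed
  then show False using zs by simp
qed

lemma quasi_riesz:
  fixes S :: "'a::cbanach \<Rightarrow> 'a"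
  assumes S: "bounded_clinear S" and N: "closed N" "csubspace N" and SN: "S ` N \<subseteq> N"
    and q: "quasinilpotent_on S N"
  shows "riesz_on S N"
  unfolding riesz_on_def
proof (intro allI impI)
  fix z :: complex assume z: "z \<noteq> 0"
  then have inv: "invertible_on (opshift S z) N" using q unfolding quasinilpotent_on_def spectrum_on_def by auto
  have Sz: "bounded_clinear (opshift S z)" by (rule bcl_opshift[OF S])
  have inj: "\<And>x. x \<in> N \<Longrightarrow> opshift S z x = 0 \<Longrightarrow> x = 0" and surj: "N \<subseteq> opshift S z ` N"
    using invertible_onD[OF Sz N(2) inv] by auto
  have eq: "opshift S z ` N = N" using surj opshift_inv[OF S N(2) SN] by blast
  have ker: "{x\<in>N. opshift S z x = 0} = {0}" using inj csub_0[OF N(2)] bcl_0[OF Sz] by auto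
  show "fredholm_on (opshift S z) N"
    unfolding fredholm_on_def
  proof (intro conjI exI[of _ "{}"])
    show "fin_dim {x\<in>N. opshift S z x = 0}" using ker fin_dim_zero by simp
    show "closed (opshift S z ` N)" using eq N(1) by simp
    show "finite {}" by simp
    show "{} \<subseteq> N" by simp
    show "N \<subseteq> {r + y |r y. r \<in> opshift S z ` N \<and> y \<in> cspan {}}"
      using eq by (force simp: cspan_cv)
  qed
qed

lemma bb_kato_on:
  fixes S :: "'a::cbanach \<Rightarrow> 'a"
  assumes S: "bounded_clinear S" and M: "closed M" "csubspace M" and bb: "bounded_below_on S M"
  shows "kato_on S M"
proof -
  obtain c where c: "c > 0" "\<forall>x\<in>M. c * norm x \<le> norm (S x)" using bb unfolding bounded_below_on_def by blast
  have "closed (S ` M)" by (rule bb_closed[OF S M c])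
  moreover have "{x\<in>M. S x = 0} \<subseteq> (S ^^ n) ` M" for n
  proof
    fix x assume "x \<in> {x\<in>M. S x = 0}"
    then have "x = 0" using bb_kernel[OF S c] by blast
    then show "x \<in> (S ^^ n) ` M" using csub_0[OF M(2)] bcl_0[OF bcl_funpow[OF S]] by (metis imageI)
  qed
  ultimately show ?thesis unfolding kato_on_def by blast
qed

lemma easy_chain:
  fixes T :: "'a::cbanach \<Rightarrow> 'a"
  assumes T: "bounded_clinear T"
  shows "sigma_ec T \<subseteq> sigma_ap T" "sigma_gKR T \<subseteq> sigma_gK T" "sigma_gK T \<subseteq> sigma_Kt T"
    "sigma_Kt T \<subseteq> sigma_eK T" "sigma_eK T \<subseteq> sigma_K T" "sigma_K T \<subseteq> sigma_ap T"
    "sigma_gKR T \<subseteq> sigma_gDRM T" "sigma_gDRM T \<subseteq> sigma_ap T"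
proof -
  have Sb: "bounded_clinear (opshift T z)" for z by (rule bcl_opshift[OF T])
  have cU: "closed (UNIV :: 'a set)" by simp
  show "sigma_ec T \<subseteq> sigma_ap T"
  proof
    fix z assume "z \<in> sigma_ec T"
    show "z \<in> sigma_ap T"
    proof (rule ccontr)
      assume "z \<notin> sigma_ap T"
      then obtain c where "c > 0" "\<forall>x\<in>UNIV. c * norm x \<le> norm (opshift T z x)"
        unfolding sigma_ap_def bounded_below_on_def by blast
      then have "closed (opshift T z ` UNIV)" using bb_closed[OF Sb cU csub_UNIV] by blast
      then show False using \<open>z \<in> sigma_ec T\<close> unfolding sigma_ec_def by simp
    qed
  qed
  have rp: "closed N \<and> csubspace N \<and> S ` N \<subseteq> N \<and> closed M \<and> csubspace M \<and> S ` M \<subseteq> M"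
    if "reducing_pair S M N" for S :: "'a \<Rightarrow> 'a" and M N :: "'a set"
    using that unfolding reducing_pair_def by blast
  show "sigma_gKR T \<subseteq> sigma_gK T"
  proof -
    have "has_GKRD (opshift T z)" if H: "has_GKD (opshift T z)" for z
    proof -
      obtain M N where MN: "reducing_pair (opshift T z) M N" "kato_on (opshift T z) M"
        "quasinilpotent_on (opshift T z) N" using H unfolding has_GKD_def by blast
      have "riesz_on (opshift T z) N" using quasi_riesz[OF Sb] rp[OF MN(1)] MN(3) by blast
      then show ?thesis unfolding has_GKRD_def using MN by blast
    qed
    then show ?thesis unfolding sigma_gKR_def sigma_gK_def by blast
  qed
  show "sigma_gK T \<subseteq> sigma_Kt T"
  proof -
    have "has_GKD (opshift T z)" if H: "kato_type (opshift T z)" for z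
    proof -
      obtain M N where MN: "reducing_pair (opshift T z) M N" "kato_on (opshift T z) M"
        "nilpotent_on (opshift T z) N" using H unfolding kato_type_def by blast
      have "quasinilpotent_on (opshift T z) N" using nilp_quasi[OF Sb] rp[OF MN(1)] MN(3) by blast
      then show ?thesis unfolding has_GKD_def using MN by blast
    qed
    then show ?thesis unfolding sigma_gK_def sigma_Kt_def by blast
  qed
  show "sigma_Kt T \<subseteq> sigma_eK T"
    unfolding sigma_Kt_def sigma_eK_def kato_type_def essentially_kato_def by blast
  show "sigma_eK T \<subseteq> sigma_K T"
  proof
    fix z assume "z \<in> sigma_eK T"
    show "z \<in> sigma_K T"
    proof (rule ccontr)
      assume "z \<notin> sigma_K T"
      then have k: "kato_on (opshift T z) UNIV" unfolding sigma_K_def kato_def by simp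
      have "nilpotent_on (opshift T z) {0}" unfolding nilpotent_on_def by (intro exI[of _ 0]) simp
      then have "essentially_kato (opshift T z)" unfolding essentially_kato_def
        using reducing_trivial[OF Sb] k fin_dim_zero by blast
      then show False using \<open>z \<in> sigma_eK T\<close> unfolding sigma_eK_def by simp
    qed
  qed
  show "sigma_K T \<subseteq> sigma_ap T"
  proof
    fix z assume "z \<in> sigma_K T"
    show "z \<in> sigma_ap T"
    proof (rule ccontr)
      assume "z \<notin> sigma_ap T"
      then have "bounded_below_on (opshift T z) UNIV" unfolding sigma_ap_def by simp
      then have "kato_on (opshift T z) UNIV" by (rule bb_kato_on[OF Sb cU csub_UNIV])
      then show False using \<open>z \<in> sigma_K T\<close> unfolding sigma_K_def kato_def by simp
    qed
  qed
  show "sigma_gKR T \<subseteq> sigma_gDRM T"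
  proof -
    have "has_GKRD (opshift T z)" if H: "has_gDR_M (opshift T z)" for z
    proof -
      obtain M N where MN: "reducing_pair (opshift T z) M N" "bounded_below_on (opshift T z) M"
        "riesz_on (opshift T z) N" using H unfolding has_gDR_M_def by blast
      have "kato_on (opshift T z) M" using bb_kato_on[OF Sb] rp[OF MN(1)] MN(2) by blast
      then show ?thesis unfolding has_GKRD_def using MN by blast
    qed
    then show ?thesis unfolding sigma_gKR_def sigma_gDRM_def by blast
  qed
  show "sigma_gDRM T \<subseteq> sigma_ap T"
  proof
    fix z assume "z \<in> sigma_gDRM T"
    show "z \<in> sigma_ap T"
    proof (rule ccontr)
      assume "z \<notin> sigma_ap T"
      then have bb: "bounded_below_on (opshift T z) UNIV" unfolding sigma_ap_def by simp
      have "riesz_on (opshift T z) {0}"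
      proof (rule quasi_riesz[OF Sb closed_zero csub_zero])
        show "opshift T z ` {0} \<subseteq> {0}" using bcl_0[OF Sb] by simp
        have "invertible_on (opshift (opshift T z) w) {0}" for w
          by (rule invertible_onI[OF bcl_opshift[OF Sb] closed_zero csub_zero]) (simp_all add: bcl_0[OF bcl_opshift[OF Sb]])
        then show "quasinilpotent_on (opshift T z) {0}" unfolding quasinilpotent_on_def spectrum_on_def by simp
      qed
      then have "has_gDR_M (opshift T z)" unfolding has_gDR_M_def
        using reducing_trivial[OF Sb] bb by blast
      then show False using \<open>z \<in> sigma_gDRM T\<close> unfolding sigma_gDRM_def by simp
    qed
  qed
qed

lemma front_res:
  fixes T :: "'a::cbanach \<Rightarrow> 'a"
  assumes "z \<in> frontier (spectrum T)" "r > 0"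
  shows "\<exists>w. cmod (w - z) < r \<and> invertible_on (opshift T w) UNIV"
proof -
  have "z \<notin> interior (spectrum T)" using assms(1) by (simp add: frontier_def)
  then have "\<not> ball z r \<subseteq> spectrum T" using assms(2) mem_interior by blast
  then obtain w where "w \<in> ball z r" "w \<notin> spectrum T" by blast
  then show ?thesis by (intro exI[of _ w]) (simp add: spectrum_def spectrum_on_def dist_norm norm_minus_commute)
qed

lemma invertible_bb:
  fixes S :: "'a::cbanach \<Rightarrow> 'a"
  assumes "invertible_on S UNIV"
  shows "bounded_below_on S UNIV"
proof -
  obtain R K where R: "\<forall>x. R (S x) = x" "\<forall>x. norm (R x) \<le> K * norm x"
    using assms unfolding invertible_on_def by blast
  have "(1 / (\<bar>K\<bar> + 1)) * norm x \<le> norm (S x)" for x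
  proof -
    have "norm x \<le> K * norm (S x)" using R by metis
    also have "\<dots> \<le> (\<bar>K\<bar> + 1) * norm (S x)" by (intro mult_right_mono) auto
    finally show ?thesis by (simp add: field_simps add_pos_nonneg)
  qed
  moreover have "1 / (\<bar>K\<bar> + 1) > 0" by (simp add: add_pos_nonneg)
  ultimately show ?thesis unfolding bounded_below_on_def by blast
qed

lemma comp_surj:
  fixes S :: "'a::cbanach \<Rightarrow> 'a"
  assumes S: "bounded_clinear S" and rp: "reducing_pair S M N"
    and inv: "invertible_on (opshift S \<nu>) UNIV"
  shows "M \<subseteq> opshift S \<nu> ` M" "N \<subseteq> opshift S \<nu> ` N"
proof -
  define A where "A = opshift S \<nu>"
  have A: "bounded_clinear A" unfolding A_def by (rule bcl_opshift[OF S])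
  have M: "csubspace M" "S ` M \<subseteq> M" and N: "csubspace N" "S ` N \<subseteq> N" and MN: "M \<inter> N = {0}"
    and dec: "\<forall>x. \<exists>m\<in>M. \<exists>n\<in>N. x = m + n" using rp unfolding reducing_pair_def by auto
  have AM: "A ` M \<subseteq> M" unfolding A_def by (rule opshift_inv[OF S M])
  have AN: "A ` N \<subseteq> N" unfolding A_def by (rule opshift_inv[OF S N])
  have inj: "\<And>x. A x = 0 \<Longrightarrow> x = 0" and surj: "UNIV \<subseteq> A ` UNIV"
    using invertible_onD[OF A csub_UNIV inv[folded A_def]] by auto
  show "M \<subseteq> opshift S \<nu> ` M"
  proof
    fix m assume m: "m \<in> M"
    obtain x where x: "m = A x" using surj by blast
    obtain a b where ab: "a \<in> M" "b \<in> N" "x = a + b" using dec by blast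
    have "A b = m - A a" using x ab bcl_add[OF A] by simp
    moreover have "A a \<in> M" using AM ab(1) by blast
    ultimately have "A b \<in> M" using csub_diff[OF M(1) m] by simp
    moreover have "A b \<in> N" using AN ab(2) by blast
    ultimately have "A b = 0" using MN by blast
    then have "b = 0" by (rule inj)
    then have "m = A a" using x ab by simp
    then show "m \<in> opshift S \<nu> ` M" using ab(1) by (simp add: A_def)
  qed
  show "N \<subseteq> opshift S \<nu> ` N"
  proof
    fix n assume n: "n \<in> N"
    obtain x where x: "n = A x" using surj by blast
    obtain a b where ab: "a \<in> M" "b \<in> N" "x = a + b" using dec by blast
    have "A a = n - A b" using x ab bcl_add[OF A] by simp
    moreover have "A b \<in> N" using AN ab(2) by blast
    ultimately have "A a \<in> N" using csub_diff[OF N(1) n] by simp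
    moreover have "A a \<in> M" using AM ab(1) by blast
    ultimately have "A a = 0" using MN by blast
    then have "a = 0" by (rule inj)
    then have "n = A b" using x ab by simp
    then show "n \<in> opshift S \<nu> ` N" using ab(2) by (simp add: A_def)
  qed
qed

lemma comb_inv:
  fixes S :: "'a::cbanach \<Rightarrow> 'a"
  assumes S: "bounded_clinear S" and rp: "reducing_pair S M N"
    and injM: "\<And>x. x \<in> M \<Longrightarrow> opshift S \<nu> x = 0 \<Longrightarrow> x = 0" and surjM: "M \<subseteq> opshift S \<nu> ` M"
    and injN: "\<And>x. x \<in> N \<Longrightarrow> opshift S \<nu> x = 0 \<Longrightarrow> x = 0" and surjN: "N \<subseteq> opshift S \<nu> ` N"
  shows "invertible_on (opshift S \<nu>) UNIV"
proof -
  define A where "A = opshift S \<nu>"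
  have A: "bounded_clinear A" unfolding A_def by (rule bcl_opshift[OF S])
  have M: "csubspace M" "S ` M \<subseteq> M" and N: "csubspace N" "S ` N \<subseteq> N" and MN: "M \<inter> N = {0}"
    and dec: "\<forall>x. \<exists>m\<in>M. \<exists>n\<in>N. x = m + n" using rp unfolding reducing_pair_def by auto
  have AM: "A ` M \<subseteq> M" unfolding A_def by (rule opshift_inv[OF S M])
  have AN: "A ` N \<subseteq> N" unfolding A_def by (rule opshift_inv[OF S N])
  have "invertible_on A UNIV"
  proof (rule invertible_onI[OF A _ csub_UNIV])
    show "closed (UNIV :: 'a set)" by simp
    show "A ` UNIV \<subseteq> UNIV" by simp
    fix x assume "x \<in> (UNIV :: 'a set)" "A x = 0"
    obtain a b where ab: "a \<in> M" "b \<in> N" "x = a + b" using dec by blast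
    have "A a = - A b" using \<open>A x = 0\<close> ab bcl_add[OF A] by (simp add: eq_neg_iff_add_eq_0)
    moreover have "A a \<in> M" "A b \<in> N" using AM AN ab by auto
    ultimately have "A a \<in> M \<inter> N" using csub_minus[OF N(1)] by simp
    then have "A a = 0" using MN by blast
    then have "a = 0" "A b = 0" using injM[OF ab(1)] \<open>A a = - A b\<close> by (auto simp: A_def)
    moreover have "b = 0" using injN[OF ab(2)] \<open>A b = 0\<close> by (simp add: A_def)
    ultimately show "x = 0" using ab by simp
  next
    show "UNIV \<subseteq> A ` UNIV"
    proof
      fix y :: 'a
      obtain m n where mn: "m \<in> M" "n \<in> N" "y = m + n" using dec by blast
      obtain a where a: "m = A a" using surjM mn(1) by (auto simp: A_def)
      obtain b where b: "n = A b" using surjN mn(2) by (auto simp: A_def)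
      have "y = A (a + b)" using mn a b bcl_add[OF A] by simp
      then show "y \<in> A ` UNIV" by blast
    qed
  qed
  then show ?thesis by (simp add: A_def)
qed

lemma hard:
  fixes T :: "'a::cbanach \<Rightarrow> 'a"
  assumes T: "bounded_clinear T"
    and ap_frontier: "sigma_ap T = frontier (spectrum T)"
    and no_isolated: "\<forall>z\<in>frontier (spectrum T). z islimpt spectrum T"
    and lam: "l \<in> sigma_ap T" and G: "has_GKRD (opshift T l)"
  shows False
proof -
  define S where "S = opshift T l"
  have S: "bounded_clinear S" unfolding S_def by (rule bcl_opshift[OF T])
  have ST: "opshift S \<nu> = opshift T (l + \<nu>)" for \<nu> unfolding S_def by (rule opshift_opshift)
  obtain M N where rp: "reducing_pair S M N" and kM: "kato_on S M" and rN: "riesz_on S N"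
    using G unfolding has_GKRD_def S_def by blast
  have M: "closed M" "csubspace M" "S ` M \<subseteq> M" and N: "closed N" "csubspace N" "S ` N \<subseteq> N"
    using rp unfolding reducing_pair_def by auto
  have lamF: "l \<in> frontier (spectrum T)" using lam ap_frontier by simp
  have res: "\<exists>\<nu>. cmod \<nu> < r \<and> invertible_on (opshift S \<nu>) UNIV" if r: "r > 0" for r
  proof -
    obtain w where w: "cmod (w - l) < r" "invertible_on (opshift T w) UNIV" using front_res[OF lamF r] by blast
    then show ?thesis using ST[of "w - l"] by (intro exI[of _ "w - l"]) simp
  qed
  have SMc: "closed (S ` M)" and SMker: "\<forall>n. {x\<in>M. S x = 0} \<subseteq> (S ^^ n) ` M"
    using kM unfolding kato_on_def by auto
  have injM: "x = 0" if x: "x \<in> M" "S x = 0" for x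
  proof (rule ccontr)
    assume "x \<noteq> 0"
    obtain r where r: "r > 0" "\<forall>\<mu>. cmod \<mu> < r \<longrightarrow> (\<exists>y\<in>M. y \<noteq> 0 \<and> opshift S \<mu> y = 0)"
      using kato_eigen[OF S M SMc SMker x \<open>x \<noteq> 0\<close>] by blast
    obtain \<nu> where \<nu>: "cmod \<nu> < r" "invertible_on (opshift S \<nu>) UNIV" using res[OF r(1)] by blast
    obtain y where y: "y \<noteq> 0" "opshift S \<nu> y = 0" using r(2) \<nu>(1) by blast
    have "\<And>x. x \<in> UNIV \<Longrightarrow> opshift S \<nu> x = 0 \<Longrightarrow> x = 0"
      using invertible_onD(1)[OF bcl_opshift[OF S] csub_UNIV \<nu>(2)] .
    then show False using y by blast
  qed
  obtain c where c: "c > 0" "\<forall>x\<in>M. c * norm x \<le> norm (S x)"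
    using inj_closed_bb[OF S M(1,2) SMc] injM by blast
  obtain \<nu>0 where \<nu>0: "cmod \<nu>0 < c/4" "invertible_on (opshift S \<nu>0) UNIV"
    using res[of "c/4"] c(1) by auto
  have surj0: "M \<subseteq> opshift S \<nu>0 ` M" using comp_surj(1)[OF S rp \<nu>0(2)] .
  have bb0: "\<forall>x\<in>M. (c - cmod \<nu>0) * norm x \<le> norm (opshift S \<nu>0 x)" by (rule bb_shift[OF c(2)])
  have invM: "(\<forall>x\<in>M. opshift S \<nu> x = 0 \<longrightarrow> x = 0) \<and> M \<subseteq> opshift S \<nu> ` M" if nu: "cmod \<nu> < c/4" for \<nu>
  proof
    have bbn: "\<forall>x\<in>M. (c - cmod \<nu>) * norm x \<le> norm (opshift S \<nu> x)" by (rule bb_shift[OF c(2)])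
    have "c - cmod \<nu> > 0" using nu c(1) by simp
    then show "\<forall>x\<in>M. opshift S \<nu> x = 0 \<longrightarrow> x = 0" using bb_kernel[OF bcl_opshift[OF S] _ bbn] by blast
    have "cmod (\<nu> - \<nu>0) \<le> cmod \<nu> + cmod \<nu>0" by (rule norm_triangle_ineq4)
    then have d: "cmod (\<nu> - \<nu>0) < c - cmod \<nu>0" using nu \<nu>0(1) c(1) by linarith
    have "M \<subseteq> opshift (opshift S \<nu>0) (\<nu> - \<nu>0) ` M"
      by (rule perturb_surj[OF bcl_opshift[OF S] M(1,2) opshift_inv[OF S M(2,3)] _ bb0 surj0 d])
        (use \<nu>0(1) c(1) in simp)
    then show "M \<subseteq> opshift S \<nu> ` M" by (simp add: opshift_opshift)
  qed
  have lsig: "l \<in> spectrum T"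
  proof -
    have "\<not> bounded_below_on (opshift T l) UNIV" using lam unfolding sigma_ap_def by simp
    then have "\<not> invertible_on (opshift T l) UNIV" using invertible_bb by blast
    then show ?thesis unfolding spectrum_def spectrum_on_def by simp
  qed
  define D where "D = ball l (c/4) - {l}"
  have "aff_dim (ball l (c/4)) = 2" using aff_dim_open[of "ball l (c/4)"] c(1) by simp
  then have conn: "connected D" unfolding D_def by (intro connected_punctured_convex) auto
  have "l islimpt spectrum T" using no_isolated lamF by blast
  then obtain x1 where x1: "x1 \<in> spectrum T" "x1 \<noteq> l" "dist x1 l < c/4"
  proof -
    have "c/4 > 0" using c(1) by simp
    then show ?thesis using that \<open>l islimpt spectrum T\<close> unfolding islimpt_approachable by blast
  qed
  have "x1 \<in> D" using x1 by (simp add: D_def dist_commute)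
  then have DS1: "D \<inter> spectrum T \<noteq> {}" using x1(1) by blast
  have "opshift T (l + \<nu>0) = opshift S \<nu>0" by (simp add: ST)
  then have "l + \<nu>0 \<notin> spectrum T" using \<nu>0(2) unfolding spectrum_def spectrum_on_def by simp
  moreover then have "l + \<nu>0 \<noteq> l" using lsig by auto
  moreover have "dist l (l + \<nu>0) < c/4" using \<nu>0(1) by (simp add: dist_norm)
  ultimately have "l + \<nu>0 \<in> D - spectrum T" unfolding D_def by simp
  then have DS2: "D - spectrum T \<noteq> {}" by blast
  obtain w' where w': "w' \<in> D" "w' \<in> frontier (spectrum T)"
    using connected_Int_frontier[OF conn DS1 DS2] by blast
  define \<mu> where "\<mu> = w' - l"
  have mu: "\<mu> \<noteq> 0" "cmod \<mu> < c/4" using w'(1) by (auto simp: D_def \<mu>_def dist_norm norm_minus_commute)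
  have Aw: "opshift S \<mu> = opshift T w'" by (simp add: ST \<mu>_def)
  define A where "A = opshift S \<mu>"
  have A: "bounded_clinear A" unfolding A_def by (rule bcl_opshift[OF S])
  have AN: "A ` N \<subseteq> N" unfolding A_def by (rule opshift_inv[OF S N(2,3)])
  have F: "fredholm_on A N" using rN mu(1) unfolding riesz_on_def A_def by blast
  have AS: "opshift A \<nu> = opshift S (\<mu> + \<nu>)" for \<nu> unfolding A_def by (rule opshift_opshift)
  have resN: "\<exists>\<nu>. cmod \<nu> < r \<and> (\<forall>x\<in>N. opshift A \<nu> x = 0 \<longrightarrow> x = 0) \<and> N \<subseteq> opshift A \<nu> ` N"
    if r: "r > 0" for r
  proof -
    obtain w where w: "cmod (w - w') < r" "invertible_on (opshift T w) UNIV" using front_res[OF w'(2) r] by blast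
    define \<nu> where "\<nu> = w - w'"
    have eq: "opshift S (\<mu> + \<nu>) = opshift T w" by (simp add: ST \<mu>_def \<nu>_def)
    have inv: "invertible_on (opshift S (\<mu> + \<nu>)) UNIV" using w(2) eq by simp
    have "\<And>x. x \<in> UNIV \<Longrightarrow> opshift S (\<mu> + \<nu>) x = 0 \<Longrightarrow> x = 0"
      using invertible_onD(1)[OF bcl_opshift[OF S] csub_UNIV inv] .
    moreover have "N \<subseteq> opshift S (\<mu> + \<nu>) ` N" using comp_surj(2)[OF S rp inv] .
    ultimately show ?thesis using w(1) AS[of \<nu>] by (intro exI[of _ \<nu>]) (simp add: \<nu>_def)
  qed
  obtain \<rho> where \<rho>: "\<rho> > 0" "\<forall>\<nu>. 0 < cmod \<nu> \<and> cmod \<nu> < \<rho> \<longrightarrow>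
      (\<forall>x\<in>N. opshift A \<nu> x = 0 \<longrightarrow> x = 0) \<and> N \<subseteq> opshift A \<nu> ` N"
    using fredholm_punctured[OF A N(1,2) AN F resN] by blast
  define e where "e = min \<rho> (c/4 - cmod \<mu>)"
  have e: "e > 0" using \<rho>(1) mu(2) by (simp add: e_def)
  have "w' islimpt spectrum T" using no_isolated w'(2) by blast
  then obtain x' where x': "x' \<in> spectrum T" "x' \<noteq> w'" "dist x' w' < e"
    using e unfolding islimpt_approachable by blast
  define \<nu> where "\<nu> = x' - w'"
  have nu: "0 < cmod \<nu>" "cmod \<nu> < \<rho>" "cmod \<nu> < c/4 - cmod \<mu>"
    using x' by (auto simp: \<nu>_def dist_norm e_def)
  have "cmod (\<mu> + \<nu>) \<le> cmod \<mu> + cmod \<nu>" by (rule norm_triangle_ineq)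
  then have "cmod (\<mu> + \<nu>) < c/4" using nu(3) by linarith
  then have Mpart: "(\<forall>x\<in>M. opshift S (\<mu> + \<nu>) x = 0 \<longrightarrow> x = 0) \<and> M \<subseteq> opshift S (\<mu> + \<nu>) ` M"
    by (rule invM)
  have Npart: "(\<forall>x\<in>N. opshift S (\<mu> + \<nu>) x = 0 \<longrightarrow> x = 0) \<and> N \<subseteq> opshift S (\<mu> + \<nu>) ` N"
  proof -
    have "0 < cmod \<nu> \<and> cmod \<nu> < \<rho>" using nu(1,2) by simp
    then have "(\<forall>x\<in>N. opshift A \<nu> x = 0 \<longrightarrow> x = 0) \<and> N \<subseteq> opshift A \<nu> ` N" by (rule \<rho>(2)[rule_format])
    then show ?thesis unfolding AS .
  qed
  have m1: "\<And>x. x \<in> M \<Longrightarrow> opshift S (\<mu> + \<nu>) x = 0 \<Longrightarrow> x = 0" using Mpart by blast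
  have m2: "M \<subseteq> opshift S (\<mu> + \<nu>) ` M" using Mpart by blast
  have n1: "\<And>x. x \<in> N \<Longrightarrow> opshift S (\<mu> + \<nu>) x = 0 \<Longrightarrow> x = 0" using Npart by blast
  have n2: "N \<subseteq> opshift S (\<mu> + \<nu>) ` N" using Npart by blast
  have "invertible_on (opshift S (\<mu> + \<nu>)) UNIV" by (rule comb_inv[OF S rp m1 m2 n1 n2])
  moreover have "opshift S (\<mu> + \<nu>) = opshift T x'" by (simp add: ST \<mu>_def \<nu>_def)
  ultimately have "x' \<notin> spectrum T" unfolding spectrum_def spectrum_on_def by simp
  then show False using x'(1) by blast
qed

theorem theorem3p22:
  fixes T :: "'a::cbanach \<Rightarrow> 'a"
  assumes inf_dim: "\<not> fin_dim (UNIV :: 'a set)"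
    and T_bounded: "bounded_clinear T"
    and ap_frontier: "sigma_ap T = frontier (spectrum T)"
    and no_isolated: "\<forall>z\<in>frontier (spectrum T). z islimpt spectrum T"
  shows "sigma_ec T \<subseteq> sigma_ap T
    \<and> sigma_ap T = sigma_gKR T
    \<and> sigma_gKR T = sigma_gK T
    \<and> sigma_gK T = sigma_Kt T
    \<and> sigma_Kt T = sigma_eK T
    \<and> sigma_eK T = sigma_K T
    \<and> sigma_K T = sigma_gDRM T"
proof -
  note E = easy_chain[OF T_bounded]
  have H: "sigma_ap T \<subseteq> sigma_gKR T"
  proof
    fix z assume z: "z \<in> sigma_ap T"
    show "z \<in> sigma_gKR T"
    proof (rule ccontr)
      assume "z \<notin> sigma_gKR T"
      then have "has_GKRD (opshift T z)" unfolding sigma_gKR_def by simp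
      then show False using hard[OF T_bounded ap_frontier no_isolated z] by blast
    qed
  qed
  have e1: "sigma_ap T = sigma_gKR T" using H E(2-6) by (intro subset_antisym) auto
  have e2: "sigma_gKR T = sigma_gK T" using H E(2-6) by (intro subset_antisym) auto
  have e3: "sigma_gK T = sigma_Kt T" using H E(2-6) by (intro subset_antisym) auto
  have e4: "sigma_Kt T = sigma_eK T" using H E(2-6) by (intro subset_antisym) auto
  have e5: "sigma_eK T = sigma_K T" using H E(2-6) by (intro subset_antisym) auto
  have e6: "sigma_K T = sigma_gDRM T" using H E(2-8) by (intro subset_antisym) auto
  show ?thesis using E(1) e1 e2 e3 e4 e5 e6 by blast
qed

end
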